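(* Let $\omega$ be uniformly distributed on $\{0,1\}^{[n]}$. For $\lambda\in(0,1)$ let $\ell_\lambda:=\lfloor n^\lambda\rfloor$, $m_\lambda:=\lfloor n/\ell_\lambda\rfloor$, partition the first $m_\lambda\ell_\lambda$ coordinates into consecutive blocks of length $\ell_\lambda$, let $S_j$ be the sum of coordinates in the $j$th block, and $S^\lambda:=\max_{1\le j\le m_\lambda}S_j$. For $\lambda,\beta\in(0,1)$ define $$s_{\lambda,\beta}:=\frac{\ell_\lambda}{2}+\frac{\sqrt{\ell_\lambda}}{2}\sqrt{2(1-\lambda)\log n-\log\log n-2\log\Big(\sqrt{4\pi(1-\lambda)}\,\log\beta^{-1}\Big)}.$$ Then for every $\lambda,\beta\in(0,1)$, $\mathbb{P}(S^\lambda\le s_{\lambda,\beta})\to\beta$ as $n\to\infty$. *)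

theory Defs
  imports "HOL-Probability.Probability"
begin

definition cube :: "nat \<Rightarrow> (nat \<Rightarrow> nat) set" where
  "cube n = PiE {..<n} (\<lambda>_. {0, 1})"

definition blen :: "real \<Rightarrow> nat \<Rightarrow> nat" where
  "blen lam n = nat \<lfloor>real n powr lam\<rfloor>"

definition nblocks :: "real \<Rightarrow> nat \<Rightarrow> nat" where
  "nblocks lam n = n div blen lam n"

definition block_sum :: "real \<Rightarrow> nat \<Rightarrow> (nat \<Rightarrow> nat) \<Rightarrow> nat \<Rightarrow> nat" where
  "block_sum lam n \<omega> j = (\<Sum>i\<in>{(j - 1) * blen lam n..<j * blen lam n}. \<omega> i)"

definition max_block :: "real \<Rightarrow> nat \<Rightarrow> (nat \<Rightarrow> nat) \<Rightarrow> nat" where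
  "max_block lam n \<omega> = Max (block_sum lam n \<omega> ` {1..nblocks lam n})"

definition thresh :: "real \<Rightarrow> real \<Rightarrow> nat \<Rightarrow> real" where
  "thresh lam \<beta> n =
     real (blen lam n) / 2 + sqrt (real (blen lam n)) / 2 *
       sqrt (2 * (1 - lam) * ln (real n) - ln (ln (real n))
             - 2 * ln (sqrt (4 * pi * (1 - lam)) * ln (1 / \<beta>)))"

end

theory Submission
  imports Defs "HOL-Real_Asymp.Real_Asymp"
begin

lemma central_aux:
  fixes A B C q :: real
  assumes "(q+1)*C = (2*q+2)*B" "(q+1)*B = (2*q+1)*A" "q \<ge> 0"
  shows "C = A * (2*(2*q+1)) / (q+1)"
proof -
  have "(q+1)*((q+1)*C) = (q+1)*((2*q+2)*B)" using assms(1) by simp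
  also have "\<dots> = (2*q+2)*((q+1)*B)" by (simp add: algebra_simps)
  also have "\<dots> = (2*q+2)*((2*q+1)*A)" using assms(2) by simp
  finally have "(q+1)*((q+1)*C) = (q+1)*(2*(2*q+1)*A)" by (simp add: algebra_simps)
  then have "(q+1)*C = 2*(2*q+1)*A" using assms(3) by simp
  then show ?thesis using assms(3) by (simp add: field_simps)
qed

lemma central_aux2:
  fixes X F q :: real
  assumes "q \<ge> 0" "F > 0"
  shows "X / F * ((q + 1/2) / (q + 1)) = X * (2*(2*q+1)) / (q+1) / (4*F)"
proof -
  have a: "X / F * ((q + 1/2) / (q + 1)) = (X*(q+1/2)) / (F*(q+1))" by simp
  have b: "X * (2*(2*q+1)) / (q+1) / (4*F) = (4*(X*(q+1/2))) / (4*(F*(q+1)))"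
    by (simp add: algebra_simps)
  show ?thesis unfolding a b by (rule mult_divide_mult_cancel_left[symmetric]) simp
qed

lemma central_gchoose: "((real p - 1/2) gchoose p) = real ((2*p) choose p) / 4^p"
proof (induction p)
  case 0 then show ?case by simp
next
  case (Suc p)
  have e1: "(Suc p) * ((Suc (2*p+1)) choose (Suc p)) = Suc (2*p+1) * ((2*p+1) choose p)"
    by (rule Suc_times_binomial)
  have e2: "(Suc p) * ((Suc (2*p)) choose (Suc p)) = Suc (2*p) * ((2*p) choose p)"
    by (rule Suc_times_binomial)
  have e3: "(Suc (2*p)) choose (Suc p) = (2*p+1) choose p"
    using binomial_symmetric[of "Suc p" "Suc (2*p)"] by simp
  have r1: "(real p+1) * real ((2 * Suc p) choose Suc p) = (2*real p+2) * real ((2*p+1) choose p)"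
  proof -
    have "Suc (2*p+1) = 2 * Suc p" by simp
    then have "(Suc p) * ((2 * Suc p) choose (Suc p)) = Suc (2*p+1) * ((2*p+1) choose p)"
      using e1 by metis
    then have "real ((Suc p) * ((2 * Suc p) choose (Suc p))) = real (Suc (2*p+1) * ((2*p+1) choose p))"
      by (simp only:)
    then show ?thesis by (simp only: of_nat_mult of_nat_Suc) (simp add: algebra_simps)
  qed
  have r2: "(real p+1) * real ((2*p+1) choose p) = (2*real p+1) * real ((2*p) choose p)"
  proof -
    have "(Suc p) * ((2*p+1) choose p) = Suc (2*p) * ((2*p) choose p)"
      using e2 e3 by metis
    then have "real ((Suc p) * ((2*p+1) choose p)) = real (Suc (2*p) * ((2*p) choose p))"
      by (simp only:)
    then show ?thesis by (simp only: of_nat_mult of_nat_Suc) (simp add: algebra_simps)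
  qed
  have r: "real ((2 * Suc p) choose Suc p) = real ((2*p) choose p) * (2*(2*real p+1)) / (real p+1)"
    by (rule central_aux[OF r1 r2]) simp
  have g: "(real (Suc p) - 1/2) gchoose (Suc p) = ((real p - 1/2) gchoose p) * ((real p + 1/2) / real (Suc p))"
    using gbinomial_rec[of "real p - 1/2" p] by (simp add: algebra_simps)
  have p4: "(4::real)^Suc p = 4 * 4^p" by simp
  have pp: "real p + 1 > 0" "(4::real)^p > 0" by auto
  have "(real (Suc p) - 1/2) gchoose (Suc p) = real ((2*p) choose p) / 4^p * ((real p + 1/2) / (real p + 1))"
    using g Suc.IH by simp
  also have "\<dots> = real ((2*p) choose p) * (2*(2*real p+1)) / (real p+1) / (4*4^p)"
    by (rule central_aux2) auto
  also have "\<dots> = real ((2 * Suc p) choose Suc p) / 4 ^ Suc p"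
    unfolding r p4 ..
  finally show ?case .
qed

lemma central_lim: "(\<lambda>p. real ((2*p) choose p) / 4^p * sqrt (real p)) \<longlonglongrightarrow> 1 / sqrt pi"
proof -
  have "(\<lambda>n. ((-1/2 + real n) gchoose n) * exp (- (-1/2) * ln (real n))) \<longlonglongrightarrow> rGamma (-1/2 + 1 :: real)"
    using Gamma_gbinomial[of "-1/2 :: real"] by simp
  moreover have "rGamma (-1/2 + 1 :: real) = 1 / sqrt pi"
    by (simp add: rGamma_inverse_Gamma Gamma_one_half_real inverse_eq_divide)
  ultimately have lim: "(\<lambda>n. ((-1/2 + real n) gchoose n) * exp (- (-1/2) * ln (real n))) \<longlonglongrightarrow> 1 / sqrt pi" by simp
  show ?thesis
  proof (rule Lim_transform_eventually[OF lim])
    show "\<forall>\<^sub>F n in sequentially. ((-1/2 + real n) gchoose n) * exp (- (-1/2) * ln (real n)) = real ((2*n) choose n) / 4^n * sqrt (real n)"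
      using eventually_gt_at_top[of "0::nat"]
    proof eventually_elim
      case (elim n)
      have "sqrt (real n) = real n powr (1/2)" by (simp add: powr_half_sqrt)
      also have "\<dots> = exp (- (-1/2) * ln (real n))" using elim by (simp add: powr_def)
      finally have "exp (- (-1/2) * ln (real n)) = sqrt (real n)" ..
      then show ?case using central_gchoose[of n] by (simp add: algebra_simps)
    qed
  qed
qed

lemma bc_identity:
  "real (l choose (l div 2)) / 2^l = real ((2 * (Suc l div 2)) choose (Suc l div 2)) / 4^(Suc l div 2)"
proof (cases "even l")
  case True
  then obtain p where l: "l = 2*p" by blast
  have "Suc l div 2 = p" using l by simp
  moreover have "(2::real)^l = 4^p" using l by (simp add: power_mult)
  ultimately show ?thesis using l by simp
next
  case False
  then obtain p where l: "l = 2*p+1" using oddE by blast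
  have q: "Suc l div 2 = Suc p" using l by simp
  have ld: "l div 2 = p" using l by simp
  have "(2 * Suc p) choose (Suc p) = Suc l choose Suc (l div 2)" using l ld by simp
  also have "\<dots> = (l choose (l div 2)) + (l choose Suc (l div 2))" by simp
  also have "(l choose Suc (l div 2)) = l choose (l div 2)" using False central_binomial_odd by blast
  finally have c: "(2 * Suc p) choose (Suc p) = 2 * (l choose p)" using ld by simp
  have "(4::real)^(Suc p) = 2 * 2^l" using l by (simp add: power_mult power_add)
  then show ?thesis unfolding q c using ld by simp
qed

lemma filterlim_half: "filterlim (\<lambda>l::nat. Suc l div 2) at_top sequentially"
  unfolding filterlim_at_top
proof
  fix N :: nat
  show "\<forall>\<^sub>F l in sequentially. N \<le> Suc l div 2"
    using eventually_ge_at_top[of "2*N"] by eventually_elim auto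
qed

lemma bc_lim: "(\<lambda>l. real (l choose (l div 2)) / 2^l * sqrt (real l)) \<longlonglongrightarrow> sqrt (2 / pi)"
proof -
  define q where "q = (\<lambda>l::nat. Suc l div 2)"
  have A: "(\<lambda>l. real ((2 * q l) choose q l) / 4^(q l) * sqrt (real (q l))) \<longlonglongrightarrow> 1 / sqrt pi"
    using filterlim_compose[OF central_lim filterlim_half] unfolding q_def by (simp add: o_def)
  have lo: "(\<lambda>l::nat. 2 * real l / (real l + 1)) \<longlonglongrightarrow> 2" by real_asymp
  have B: "(\<lambda>l. real l / real (q l)) \<longlonglongrightarrow> 2"
  proof (rule tendsto_sandwich[OF _ _ lo tendsto_const])
    show "\<forall>\<^sub>F l in sequentially. 2 * real l / (real l + 1) \<le> real l / real (q l)"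
      using eventually_gt_at_top[of "0::nat"]
    proof eventually_elim
      case (elim l)
      have "2 * q l \<le> l + 1" "q l > 0" using elim unfolding q_def by auto
      then have h: "2 * real (q l) \<le> real l + 1" "real (q l) > 0" by linarith+
      have "real l * (2 * real (q l)) \<le> real l * (real l + 1)"
        by (rule mult_left_mono) (use h in auto)
      then have "real l * (real (q l) * 2) \<le> real l + real l * real l" by (simp add: algebra_simps)
      then show ?case using h by (simp add: field_simps)
    qed
    show "\<forall>\<^sub>F l in sequentially. real l / real (q l) \<le> 2"
      using eventually_gt_at_top[of "0::nat"]
    proof eventually_elim
      case (elim l)
      have "l \<le> 2 * q l" "q l > 0" using elim unfolding q_def by auto
      then have "real l \<le> 2 * real (q l)" "real (q l) > 0" by linarith+
      then show ?case by (simp add: field_simps)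
    qed
  qed
  have C: "(\<lambda>l. real ((2 * q l) choose q l) / 4^(q l) * sqrt (real (q l)) * sqrt (real l / real (q l)))
      \<longlonglongrightarrow> 1 / sqrt pi * sqrt 2"
    by (intro tendsto_mult A tendsto_real_sqrt B)
  have "1 / sqrt pi * sqrt 2 = sqrt (2 / pi)" by (simp add: real_sqrt_divide)
  then have C': "(\<lambda>l. real ((2 * q l) choose q l) / 4^(q l) * sqrt (real (q l)) * sqrt (real l / real (q l)))
      \<longlonglongrightarrow> sqrt (2 / pi)" using C by simp
  show ?thesis
  proof (rule Lim_transform_eventually[OF C'])
    show "\<forall>\<^sub>F l in sequentially. real ((2 * q l) choose q l) / 4^(q l) * sqrt (real (q l)) * sqrt (real l / real (q l))
       = real (l choose (l div 2)) / 2^l * sqrt (real l)"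
      using eventually_gt_at_top[of "0::nat"]
    proof eventually_elim
      case (elim l)
      have qp: "real (q l) > 0" using elim unfolding q_def by auto
      have "sqrt (real (q l)) * sqrt (real l / real (q l)) = sqrt (real l)"
        using qp by (simp add: real_sqrt_mult[symmetric])
      then show ?case using bc_identity[of l] unfolding q_def by (simp add: mult.assoc)
    qed
  qed
qed


definition bp :: "nat \<Rightarrow> nat \<Rightarrow> real" where "bp l k = real (l choose k) / 2^l"
definition rr :: "nat \<Rightarrow> nat \<Rightarrow> real" where "rr l k = (real l - real k) / (real k + 1)"

lemma bp_nonneg: "bp l k \<ge> 0" by (simp add: bp_def)
lemma bp_pos: "k \<le> l \<Longrightarrow> bp l k > 0" by (simp add: bp_def)
lemma bp_zero: "l < k \<Longrightarrow> bp l k = 0" by (simp add: bp_def)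

lemma bp_Suc: "bp l (Suc k) = bp l k * rr l k"
proof (cases "k < l")
  case True
  have "Suc k * (l choose Suc k) = (l - k) * (l choose k)"
    using binomial_absorption[of k l] binomial_absorb_comp[of l k] by simp
  then have "real (Suc k) * real (l choose Suc k) = (real l - real k) * real (l choose k)"
    using True by (metis of_nat_diff of_nat_mult less_imp_le)
  then have "real (l choose Suc k) = real (l choose k) * ((real l - real k) / (real k + 1))"
    by (simp add: field_simps)
  then show ?thesis by (simp add: bp_def rr_def)
next
  case False
  then show ?thesis
  proof (cases "k = l")
    case True then show ?thesis by (simp add: bp_def rr_def)
  next
    case False
    with \<open>\<not> k < l\<close> have "l < k" by simp
    then have "l < Suc k" by simp
    show ?thesis unfolding bp_def rr_def binomial_eq_0[OF \<open>l < k\<close>] binomial_eq_0[OF \<open>l < Suc k\<close>] by simp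
  qed
qed

lemma rr_nonneg: "k \<le> l \<Longrightarrow> rr l k \<ge> 0" by (simp add: rr_def)

lemma rr_mono: assumes "k \<le> k'" shows "rr l k' \<le> rr l k"
proof -
  have "(real l - real k') * (real k + 1) \<le> (real l - real k) * (real k' + 1)"
  proof -
    have "(real l + 1) * (real k - real k') \<le> 0"
      using assms by (intro mult_nonneg_nonpos) auto
    then show ?thesis by (simp add: algebra_simps)
  qed
  then show ?thesis unfolding rr_def by (simp add: field_simps)
qed

lemma sum_shift_Icc: "(\<Sum>k=a..l. f k) = (\<Sum>j\<le>l-a. f (a+j))" if "a \<le> l" for f :: "nat \<Rightarrow> real"
proof -
  have "(\<Sum>k=a..l. f k) = (\<Sum>k=0+a..(l-a)+a. f k)" using that by simp
  also have "\<dots> = (\<Sum>j=0..l-a. f (j+a))" by (rule sum.shift_bounds_cl_nat_ivl)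
  also have "\<dots> = (\<Sum>j\<le>l-a. f (a+j))" by (simp add: atLeast0AtMost add.commute)
  finally show ?thesis .
qed

lemma tail_upper:
  assumes "a \<le> l" "rr l a < 1"
  shows "(\<Sum>k=a..l. bp l k) \<le> bp l a / (1 - rr l a)"
proof -
  let ?r = "rr l a"
  have r0: "?r \<ge> 0" using assms by (simp add: rr_nonneg)
  have step: "bp l (a+j) \<le> bp l a * ?r ^ j" for j
  proof (induction j)
    case 0 then show ?case by simp
  next
    case (Suc j)
    show ?case
    proof (cases "a + j \<le> l")
      case True
      have "bp l (a + Suc j) = bp l (a+j) * rr l (a+j)" by (simp add: bp_Suc)
      also have "\<dots> \<le> (bp l a * ?r ^ j) * ?r"
        by (intro mult_mono Suc.IH rr_mono) (use True in \<open>auto simp: rr_nonneg bp_nonneg r0\<close>)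
      finally show ?thesis by (simp add: algebra_simps)
    next
      case False
      then have "bp l (a + Suc j) = 0" by (intro bp_zero) auto
      then show ?thesis using r0 bp_nonneg[of l a] by simp
    qed
  qed
  have "(\<Sum>k=a..l. bp l k) = (\<Sum>j\<le>l-a. bp l (a+j))" using assms(1) by (rule sum_shift_Icc)
  also have "\<dots> \<le> (\<Sum>j\<le>l-a. bp l a * ?r ^ j)" by (intro sum_mono step)
  also have "\<dots> = bp l a * (\<Sum>j<Suc (l-a). ?r ^ j)" by (simp add: sum_distrib_left lessThan_Suc_atMost)
  also have "\<dots> = bp l a * ((1 - ?r ^ Suc (l-a)) / (1 - ?r))"
  proof -
    have gp: "(\<Sum>j<n. ?r^j) = (1 - ?r^n) / (1 - ?r)" for n using assms by (simp add: sum_gp_strict)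
    show ?thesis by (simp only: gp)
  qed
  also have "\<dots> \<le> bp l a * (1 / (1 - ?r))"
    using assms r0 by (intro mult_left_mono divide_right_mono) (auto simp: bp_nonneg)
  finally show ?thesis by simp
qed

lemma tail_lower:
  assumes "a + J \<le> l" "l < 2*(a+J)+1"
  shows "bp l a * ((1 - rr l (a+J) ^ Suc J) / (1 - rr l (a+J))) \<le> (\<Sum>k=a..l. bp l k)"
proof -
  let ?r = "rr l (a+J)"
  have r0: "?r \<ge> 0" using assms by (simp add: rr_nonneg)
  have r1: "?r < 1" unfolding rr_def using assms(2) by (simp add: field_simps)
  have gp: "(\<Sum>j<n. ?r^j) = (1 - ?r^n) / (1 - ?r)" for n using r1 by (simp add: sum_gp_strict)
  have step: "j \<le> J \<Longrightarrow> bp l a * ?r ^ j \<le> bp l (a+j)" for j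
  proof (induction j)
    case 0 then show ?case by simp
  next
    case (Suc j)
    have "bp l a * ?r ^ Suc j = (bp l a * ?r ^ j) * ?r" by (simp add: mult.assoc mult.commute)
    also have "\<dots> \<le> bp l (a+j) * rr l (a+j)"
      by (intro mult_mono Suc.IH rr_mono) (use Suc.prems r0 in \<open>auto simp: bp_nonneg\<close>)
    also have "\<dots> = bp l (a + Suc j)" by (simp add: bp_Suc)
    finally show ?case .
  qed
  have "bp l a * ((1 - ?r ^ Suc J) / (1 - ?r)) = (\<Sum>j<Suc J. bp l a * ?r ^ j)"
    by (simp only: gp sum_distrib_left[symmetric])
  also have "\<dots> \<le> (\<Sum>j\<le>J. bp l (a+j))" unfolding lessThan_Suc_atMost by (intro sum_mono step) auto
  also have "\<dots> \<le> (\<Sum>j\<le>l-a. bp l (a+j))"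
    using assms by (intro sum_mono2) (auto simp: bp_nonneg)
  also have "\<dots> = (\<Sum>k=a..l. bp l k)" using assms by (intro sum_shift_Icc[symmetric]) auto
  finally show ?thesis .
qed

lemma ln_rr_est:
  assumes "real l / 2 - 1/2 \<le> real k" "4*(real k - real l/2 + 1) \<le> real l"
  shows "\<bar>ln (rr l k) + 2*(2*real k + 1 - real l)/real l\<bar> \<le> 16*(real k - real l/2 + 1)^2/(real l)^2"
proof -
  define x where "x = real k - real l / 2"
  define y1 where "y1 = 2*x/real l"
  define y2 where "y2 = 2*(x+1)/real l"
  have x0: "x \<ge> -1/2" using assms(1) unfolding x_def by simp
  have h1: "4*real k \<ge> 2*real l - 2" using assms(1) by simp
  have h2: "4*real k + 4 \<le> 3*real l" using assms(2) by simp
  have l2: "real l \<ge> 2" using h1 h2 by linarith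
  have lp: "real l > 0" using l2 by simp
  have y2b: "y2 \<le> 1/2" "y2 > 0" unfolding y2_def using assms(2) x0 lp by (auto simp: x_def field_simps)
  have y1u: "y1 \<le> y2" unfolding y1_def y2_def using lp by (simp add: divide_right_mono)
  have y1l: "y1 \<ge> -1/2"
  proof -
    have "2*x \<ge> -1" using x0 by simp
    also have "-1 \<ge> - real l / 2" using l2 by simp
    finally show ?thesis unfolding y1_def using lp by (simp add: field_simps)
  qed
  have y1abs: "\<bar>y1\<bar> \<le> y2"
  proof -
    have "-y1 \<le> y2" unfolding y1_def y2_def using lp x0 by (simp add: field_simps)
    then show ?thesis using y1u by simp
  qed
  have rr_eq: "rr l k = (1 + (-y1)) / (1 + y2)"
  proof -
    have A: "real l - real k = (real l / 2) * (1 + (-y1))" unfolding y1_def x_def using lp by (simp add: field_simps)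
    have B: "real k + 1 = (real l / 2) * (1 + y2)" unfolding y2_def x_def using lp by (simp add: field_simps)
    have "rr l k = ((real l / 2) * (1 + (-y1))) / ((real l / 2) * (1 + y2))" unfolding rr_def A B ..
    also have "\<dots> = (1 + (-y1)) / (1 + y2)" using lp by (rule_tac mult_divide_mult_cancel_left) simp
    finally show ?thesis .
  qed
  have p1: "1 + (-y1) > 0" using y1u y2b by simp
  have p2: "1 + y2 > 0" using y2b by simp
  have lnrr: "ln (rr l k) = ln (1 + (-y1)) - ln (1 + y2)"
    unfolding rr_eq using p1 p2 by (simp add: ln_div)
  have b1: "\<bar>ln (1 + (-y1)) - (-y1)\<bar> \<le> 2 * (-y1)^2"
    by (rule abs_ln_one_plus_x_minus_x_bound) (use y1l y1u y2b in auto)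
  have b2: "\<bar>ln (1 + y2) - y2\<bar> \<le> 2 * y2^2"
    by (rule abs_ln_one_plus_x_minus_x_bound) (use y2b in auto)
  have sq: "y1^2 \<le> y2^2"
  proof -
    have "\<bar>y1\<bar>^2 \<le> y2^2" by (rule power_mono[OF y1abs]) simp
    then show ?thesis by simp
  qed
  have sum: "y1 + y2 = 2*(2*real k + 1 - real l)/real l"
    unfolding y1_def y2_def x_def using lp by (simp add: field_simps)
  have "\<bar>ln (rr l k) + (y1 + y2)\<bar> \<le> 2*y1^2 + 2*y2^2"
    using b1 b2 unfolding lnrr by (simp add: abs_le_iff)
  also have "\<dots> \<le> 4*y2^2" using sq by simp
  also have "\<dots> = 16*(real k - real l/2 + 1)^2/(real l)^2"
    unfolding y2_def power_divide power_mult_distrib x_def by simp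
  finally show ?thesis unfolding sum .
qed

lemma lin_aux: "(p::real) * X + X = (p + 1) * X" by (simp add: algebra_simps)

lemma local_est:
  assumes "l div 2 \<le> a" "4*(real a - real l/2 + 1) \<le> real l"
  shows "\<bar>ln (bp l a) - ln (bp l (l div 2)) + 2*(real a - real l/2)^2/real l\<bar>
           \<le> 16*(real a - real l/2 + 1)^3/(real l)^2 + 1/real l"
proof -
  define c where "c = l div 2"
  have c1: "real c \<ge> real l/2 - 1/2" "real c \<le> real l / 2" unfolding c_def by linarith+
  define E where "E = (\<lambda>a::nat. ln (bp l a) - ln (bp l c) + 2/real l*((real a - real l/2)^2 - (real c - real l/2)^2))"
  have claim: "c \<le> a \<Longrightarrow> 4*(real a - real l/2 + 1) \<le> real l \<Longrightarrow>
      \<bar>E a\<bar> \<le> (real a - real c) * (16*(real a - real l/2 + 1)^2/(real l)^2)" for a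
  proof (induction a)
    case 0
    then have "c = 0" by simp
    then show ?case unfolding E_def by simp
  next
    case (Suc a)
    show ?case
    proof (cases "c = Suc a")
      case True
      then show ?thesis unfolding E_def by simp
    next
      case False
      then have ca: "c \<le> a" using Suc.prems by simp
      have conda: "4*(real a - real l/2 + 1) \<le> real l" using Suc.prems by simp
      have IH: "\<bar>E a\<bar> \<le> (real a - real c) * (16*(real a - real l/2 + 1)^2/(real l)^2)"
        using Suc.IH ca conda by blast
      have car: "real c \<le> real a" using ca by simp
      have h2: "4*real a + 4 \<le> 3*real l" using conda by simp
      have h1: "2*real l - 2 \<le> 4 * real a" using c1 car by simp
      have lp: "real l > 0" using h1 h2 by linarith
      have "real a < real l" using h1 h2 by linarith
      then have al: "a < l" by simp
      have ak: "real l / 2 - 1/2 \<le> real a" using c1 car by linarith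
      have st: "\<bar>ln (rr l a) + 2*(2*real a + 1 - real l)/real l\<bar> \<le> 16*(real a - real l/2 + 1)^2/(real l)^2"
        by (rule ln_rr_est[OF ak conda])
      have bpa: "bp l a > 0" using al by (simp add: bp_pos)
      have rra: "rr l a > 0" using al by (simp add: rr_def)
      have lnS: "ln (bp l (Suc a)) = ln (bp l a) + ln (rr l a)"
        unfolding bp_Suc using bpa rra by (simp add: ln_mult)
      have ES: "E (Suc a) = E a + (ln (rr l a) + 2*(2*real a + 1 - real l)/real l)"
        unfolding E_def lnS using lp by (simp add: field_simps power2_eq_square)
      have mono: "(real a - real l/2 + 1)^2 \<le> (real (Suc a) - real l/2 + 1)^2"
        by (rule power_mono) (use ak in auto)
      have "\<bar>E (Suc a)\<bar> \<le> \<bar>E a\<bar> + 16*(real a - real l/2 + 1)^2/(real l)^2"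
        unfolding ES using st by linarith
      also have "\<dots> \<le> (real a - real c) * (16*(real (Suc a) - real l/2 + 1)^2/(real l)^2)
                       + 16*(real (Suc a) - real l/2 + 1)^2/(real l)^2"
      proof -
        have m2: "16*(real a - real l/2 + 1)^2/(real l)^2 \<le> 16*(real (Suc a) - real l/2 + 1)^2/(real l)^2"
          using mono by (simp add: divide_right_mono)
        have "(real a - real c) * (16*(real a - real l/2 + 1)^2/(real l)^2)
            \<le> (real a - real c) * (16*(real (Suc a) - real l/2 + 1)^2/(real l)^2)"
          by (rule mult_left_mono[OF m2]) (use ca in simp)
        then show ?thesis using IH m2 by linarith
      qed
      also have "\<dots> = ((real a - real c) + 1) * (16*(real (Suc a) - real l/2 + 1)^2/(real l)^2)"
        by (rule lin_aux)
      also have "(real a - real c) + 1 = real (Suc a) - real c" by simp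
      finally show ?thesis .
    qed
  qed
  have Ea: "\<bar>E a\<bar> \<le> (real a - real c) * (16*(real a - real l/2 + 1)^2/(real l)^2)"
    using claim assms unfolding c_def by blast
  have car: "real c \<le> real a" using assms(1) unfolding c_def by simp
  have h2: "4*real a + 4 \<le> 3*real l" using assms(2) by simp
  have h1: "2*real l - 2 \<le> 4 * real a" using c1 car by simp
  have lp: "real l > 0" using h1 h2 by linarith
  have "(real a - real c) * (16*(real a - real l/2 + 1)^2/(real l)^2)
      \<le> (real a - real l/2 + 1) * (16*(real a - real l/2 + 1)^2/(real l)^2)"
    by (rule mult_right_mono) (use c1 in auto)
  also have "\<dots> = 16*(real a - real l/2 + 1)^3/(real l)^2" by (simp add: power2_eq_square power3_eq_cube)
  finally have Ea2: "\<bar>E a\<bar> \<le> 16*(real a - real l/2 + 1)^3/(real l)^2" using Ea by linarith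
  have csq: "(real c - real l/2)^2 \<le> 1/4"
  proof -
    have "\<bar>real c - real l/2\<bar> \<le> 1/2" using c1 by linarith
    then have "\<bar>real c - real l/2\<bar>^2 \<le> (1/2)^2" by (rule power_mono) simp
    then show ?thesis by (simp add: power2_eq_square)
  qed
  have cterm: "0 \<le> 2/real l * (real c - real l/2)^2" "2/real l * (real c - real l/2)^2 \<le> 1/real l"
  proof -
    show "0 \<le> 2/real l * (real c - real l/2)^2" using lp by simp
    have "2/real l * (real c - real l/2)^2 \<le> 2/real l * (1/4)" by (rule mult_left_mono[OF csq]) (use lp in simp)
    also have "\<dots> \<le> 1/real l" using lp by (simp add: field_simps)
    finally show "2/real l * (real c - real l/2)^2 \<le> 1/real l" .
  qed
  have eq: "ln (bp l a) - ln (bp l c) + 2*(real a - real l/2)^2/real l = E a + 2/real l * (real c - real l/2)^2"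
    unfolding E_def by (simp add: algebra_simps)
  show ?thesis unfolding c_def[symmetric] eq using Ea2 cterm by linarith
qed


lemma finite_cube: "finite (cube N)" unfolding cube_def by (intro finite_PiE) auto
lemma card_cube: "card (cube N) = 2^N" unfolding cube_def by (simp add: card_PiE numeral_2_eq_2)
lemma cube_nonempty: "cube N \<noteq> {}" unfolding cube_def by (simp add: PiE_eq_empty_iff)

lemma mem_cube: "\<omega> \<in> cube N \<longleftrightarrow> (\<forall>i<N. \<omega> i \<in> {0,1}) \<and> (\<forall>i. N \<le> i \<longrightarrow> \<omega> i = undefined)"
  unfolding cube_def PiE_iff extensional_def by auto

lemma split_card:
  fixes Q R :: "(nat \<Rightarrow> nat) \<Rightarrow> bool"
  shows "card {\<omega> \<in> cube (a+b). Q (restrict \<omega> {..<a}) \<and> R (\<lambda>i\<in>{..<b}. \<omega> (a+i))}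
       = card {x \<in> cube a. Q x} * card {y \<in> cube b. R y}"
proof -
  define f where "f = (\<lambda>\<omega>::nat\<Rightarrow>nat. (restrict \<omega> {..<a}, \<lambda>i\<in>{..<b}. \<omega> (a+i)))"
  define g where "g = (\<lambda>(x::nat\<Rightarrow>nat, y::nat\<Rightarrow>nat). (\<lambda>i. if i < a then x i else if i < a+b then y (i-a) else undefined))"
  let ?S = "{\<omega> \<in> cube (a+b). Q (restrict \<omega> {..<a}) \<and> R (\<lambda>i\<in>{..<b}. \<omega> (a+i))}"
  let ?T = "{x \<in> cube a. Q x} \<times> {y \<in> cube b. R y}"
  have "bij_betw f ?S ?T"
  proof (rule bij_betw_byWitness[where f'=g])
    show "\<forall>\<omega>\<in>?S. g (f \<omega>) = \<omega>"
    proof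
      fix \<omega> assume "\<omega> \<in> ?S"
      then have w: "\<omega> \<in> cube (a+b)" by simp
      show "g (f \<omega>) = \<omega>"
      proof
        fix i
        show "g (f \<omega>) i = \<omega> i"
          using w unfolding mem_cube f_def g_def by auto
      qed
    qed
    show "\<forall>p\<in>?T. f (g p) = p"
    proof
      fix p assume "p \<in> ?T"
      then obtain x y where p: "p = (x,y)" "x \<in> cube a" "y \<in> cube b" by auto
      have "restrict (g p) {..<a} = x"
      proof
        fix i show "restrict (g p) {..<a} i = x i" using p unfolding g_def mem_cube by auto
      qed
      moreover have "(\<lambda>i\<in>{..<b}. g p (a+i)) = y"
      proof
        fix i show "(\<lambda>i\<in>{..<b}. g p (a+i)) i = y i" using p unfolding g_def mem_cube by auto
      qed
      ultimately show "f (g p) = p" unfolding f_def using p by simp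
    qed
    show "f ` ?S \<subseteq> ?T"
    proof
      fix q assume "q \<in> f ` ?S"
      then obtain \<omega> where w: "\<omega> \<in> ?S" "q = f \<omega>" by blast
      have "restrict \<omega> {..<a} \<in> cube a" using w(1) unfolding mem_cube by auto
      moreover have "(\<lambda>i\<in>{..<b}. \<omega> (a+i)) \<in> cube b" using w(1) unfolding mem_cube by auto
      ultimately show "q \<in> ?T" using w unfolding f_def by auto
    qed
    show "g ` ?T \<subseteq> ?S"
    proof
      fix w assume "w \<in> g ` ?T"
      then obtain x y where p: "w = g (x,y)" "x \<in> cube a" "y \<in> cube b" "Q x" "R y" by auto
      have "restrict w {..<a} = x"
      proof
        fix i show "restrict w {..<a} i = x i" using p unfolding g_def mem_cube by auto
      qed
      moreover have "(\<lambda>i\<in>{..<b}. w (a+i)) = y"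
      proof
        fix i show "(\<lambda>i\<in>{..<b}. w (a+i)) i = y i" using p unfolding g_def mem_cube by auto
      qed
      moreover have "w \<in> cube (a+b)" using p(1,2,3) unfolding g_def mem_cube by auto
      ultimately show "w \<in> ?S" using p by simp
    qed
  qed
  then have "card ?S = card ?T" by (rule bij_betw_same_card)
  then show ?thesis by (simp add: card_cartesian_product)
qed

definition good :: "nat \<Rightarrow> nat \<Rightarrow> real \<Rightarrow> (nat \<Rightarrow> nat) \<Rightarrow> bool" where
  "good l m s \<omega> = (\<forall>j\<in>{1..m}. real (\<Sum>i\<in>{(j-1)*l..<j*l}. \<omega> i) \<le> s)"

lemma good_restrict: "m*l \<le> N \<Longrightarrow> good l m s (restrict \<omega> {..<N}) = good l m s \<omega>"
proof -
  assume N: "m*l \<le> N"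
  have "(\<Sum>i\<in>{(j-1)*l..<j*l}. restrict \<omega> {..<N} i) = (\<Sum>i\<in>{(j-1)*l..<j*l}. \<omega> i)" if "j \<in> {1..m}" for j
  proof (rule sum.cong)
    fix i assume i: "i \<in> {(j-1)*l..<j*l}"
    have "j*l \<le> m*l" using that by simp
    moreover have "i < j*l" using i by simp
    ultimately have "i < N" using N by linarith
    then show "restrict \<omega> {..<N} i = \<omega> i" by simp
  qed simp
  then show ?thesis unfolding good_def by simp
qed

lemma card_blocks:
  "card {\<omega> \<in> cube (m*l). good l m s \<omega>} = (card {x \<in> cube l. real (\<Sum>i<l. x i) \<le> s})^m"
proof (induction m)
  case 0
  have "{\<omega> \<in> cube (0*l). good l 0 s \<omega>} = cube 0" unfolding good_def by auto
  then show ?case by (simp add: card_cube)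
next
  case (Suc m)
  let ?R = "\<lambda>y::nat\<Rightarrow>nat. real (\<Sum>i<l. y i) \<le> s"
  have eq: "{\<omega> \<in> cube (Suc m * l). good l (Suc m) s \<omega>}
      = {\<omega> \<in> cube (m*l + l). good l m s (restrict \<omega> {..<m*l}) \<and> ?R (\<lambda>i\<in>{..<l}. \<omega> (m*l+i))}"
  proof -
    have "good l (Suc m) s \<omega> = (good l m s (restrict \<omega> {..<m*l}) \<and> ?R (\<lambda>i\<in>{..<l}. \<omega> (m*l+i)))" for \<omega>
    proof -
      have last: "(\<Sum>i\<in>{(Suc m - 1)*l..<Suc m*l}. \<omega> i) = (\<Sum>i<l. (\<lambda>i\<in>{..<l}. \<omega> (m*l+i)) i)"
      proof -
        have "(\<Sum>i\<in>{(Suc m - 1)*l..<Suc m*l}. \<omega> i) = (\<Sum>i\<in>{0 + m*l..<l + m*l}. \<omega> i)" by (simp add: add.commute)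
        also have "\<dots> = (\<Sum>i\<in>{0..<l}. \<omega> (i + m*l))" by (rule sum.shift_bounds_nat_ivl)
        also have "\<dots> = (\<Sum>i<l. (\<lambda>i\<in>{..<l}. \<omega> (m*l+i)) i)" by (simp add: atLeast0LessThan add.commute)
        finally show ?thesis .
      qed
      have A: "good l (Suc m) s \<omega> = (good l m s \<omega> \<and> real (\<Sum>i\<in>{(Suc m - 1)*l..<Suc m*l}. \<omega> i) \<le> s)"
        unfolding good_def by (auto simp: atLeastAtMostSuc_conv)
      show ?thesis unfolding A last good_restrict[OF le_refl] by (rule refl)
    qed
    then show ?thesis by (simp add: add.commute)
  qed
  have sc: "card {\<omega> \<in> cube (m*l + l). good l m s (restrict \<omega> {..<m*l}) \<and> ?R (\<lambda>i\<in>{..<l}. \<omega> (m*l+i))}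
     = card {x \<in> cube (m*l). good l m s x} * card {y \<in> cube l. ?R y}" by (rule split_card)
  have "card {\<omega> \<in> cube (Suc m * l). good l (Suc m) s \<omega>} = card {x \<in> cube (m*l). good l m s x} * card {y \<in> cube l. ?R y}"
    by (simp only: eq sc)
  also have "\<dots> = (card {y \<in> cube l. ?R y})^m * card {y \<in> cube l. ?R y}" by (simp only: Suc.IH)
  finally show ?case by simp
qed

lemma sum_cube_card: "x \<in> cube l \<Longrightarrow> (\<Sum>i<l. x i) = card {i\<in>{..<l}. x i = 1}"
proof -
  assume x: "x \<in> cube l"
  have "(\<Sum>i<l. x i) = (\<Sum>i<l. of_bool (x i = 1))"
  proof (rule sum.cong)
    fix i assume "i \<in> {..<l}"
    then have "x i \<in> {0,1}" using x unfolding mem_cube by auto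
    then show "x i = of_bool (x i = 1)" by auto
  qed simp
  also have "\<dots> = card ({..<l} \<inter> {i. x i = 1})" by simp
  finally show ?thesis by (simp add: Collect_conj_eq lessThan_def)
qed

lemma card_sum_eq: "card {x \<in> cube l. (\<Sum>i<l. x i) = k} = l choose k"
proof -
  define f where "f = (\<lambda>x::nat\<Rightarrow>nat. {i\<in>{..<l}. x i = 1})"
  define g where "g = (\<lambda>A::nat set. (\<lambda>i\<in>{..<l}. if i \<in> A then 1 else (0::nat)))"
  let ?S = "{x \<in> cube l. (\<Sum>i<l. x i) = k}"
  let ?T = "{A. A \<subseteq> {..<l} \<and> card A = k}"
  have gA: "{i\<in>{..<l}. g A i = 1} = A" if "A \<subseteq> {..<l}" for A
    using that unfolding g_def by auto
  have gc: "g A \<in> cube l" for A unfolding g_def mem_cube by auto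
  have "bij_betw f ?S ?T"
  proof (rule bij_betw_byWitness[where f'=g])
    show "\<forall>x\<in>?S. g (f x) = x"
    proof
      fix x assume "x \<in> ?S"
      then have x: "x \<in> cube l" by simp
      show "g (f x) = x"
      proof
        fix i show "g (f x) i = x i"
          using x unfolding g_def f_def mem_cube by (cases "i < l") auto
      qed
    qed
    show "\<forall>A\<in>?T. f (g A) = A" unfolding f_def using gA by auto
    show "f ` ?S \<subseteq> ?T" unfolding f_def using sum_cube_card by auto
    show "g ` ?T \<subseteq> ?S"
    proof
      fix x assume "x \<in> g ` ?T"
      then obtain A where A: "x = g A" "A \<subseteq> {..<l}" "card A = k" by auto
      have "(\<Sum>i<l. x i) = k" using sum_cube_card[OF gc[of A]] gA[OF A(2)] A by simp
      then show "x \<in> ?S" using A gc by simp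
    qed
  qed
  then have "card ?S = card ?T" by (rule bij_betw_same_card)
  also have "\<dots> = l choose k" using n_subsets[of "{..<l}" k] by simp
  finally show ?thesis .
qed

lemma card_le: "card {x \<in> cube l. real (\<Sum>i<l. x i) \<le> s} = (\<Sum>k\<in>{k. k \<le> l \<and> real k \<le> s}. l choose k)"
proof -
  let ?K = "{k. k \<le> l \<and> real k \<le> s}"
  have le: "(\<Sum>i<l. x i) \<le> l" if "x \<in> cube l" for x
  proof -
    have "(\<Sum>i<l. x i) \<le> (\<Sum>i<l. (1::nat))"
      by (rule sum_mono) (use that in \<open>auto simp: mem_cube\<close>)
    then show ?thesis by simp
  qed
  have eq: "{x \<in> cube l. real (\<Sum>i<l. x i) \<le> s} = (\<Union>k\<in>?K. {x \<in> cube l. (\<Sum>i<l. x i) = k})"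
    using le by auto
  have "card (\<Union>k\<in>?K. {x \<in> cube l. (\<Sum>i<l. x i) = k}) = (\<Sum>k\<in>?K. card {x \<in> cube l. (\<Sum>i<l. x i) = k})"
    by (rule card_UN_disjoint) (auto simp: finite_cube)
  then show ?thesis unfolding eq card_sum_eq by simp
qed

lemma max_le_iff: "finite A \<Longrightarrow> A \<noteq> {} \<Longrightarrow> real (Max A) \<le> s \<longleftrightarrow> (\<forall>x\<in>A. real x \<le> s)"
proof
  assume "finite A" "A \<noteq> {}" "real (Max A) \<le> s"
  then show "\<forall>x\<in>A. real x \<le> s" by (meson Max_ge of_nat_le_iff order_trans)
next
  assume "finite A" "A \<noteq> {}" "\<forall>x\<in>A. real x \<le> s"
  then show "real (Max A) \<le> s" using Max_in by blast
qed

lemma prob_formula: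
  assumes "nblocks lam n \<ge> 1"
  shows "measure_pmf.prob (pmf_of_set (cube n)) {\<omega>. real (max_block lam n \<omega>) \<le> s}
       = (\<Sum>k\<in>{k. k \<le> blen lam n \<and> real k \<le> s}. bp (blen lam n) k) ^ nblocks lam n"
proof -
  define l where "l = blen lam n"
  define m where "m = nblocks lam n"
  have m1: "m \<ge> 1" using assms unfolding m_def .
  have ml: "m * l \<le> n" unfolding m_def l_def nblocks_def by (simp add: div_times_less_eq_dividend)
  define c where "c = card {x \<in> cube l. real (\<Sum>i<l. x i) \<le> s}"
  have set_eq: "cube n \<inter> {\<omega>. real (max_block lam n \<omega>) \<le> s} = {\<omega> \<in> cube n. good l m s \<omega>}"
  proof -
    have "real (max_block lam n \<omega>) \<le> s \<longleftrightarrow> good l m s \<omega>" for \<omega>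
    proof -
      have "real (max_block lam n \<omega>) \<le> s \<longleftrightarrow> (\<forall>x\<in>block_sum lam n \<omega> ` {1..m}. real x \<le> s)"
        unfolding max_block_def m_def[symmetric] by (rule max_le_iff) (use m1 in auto)
      also have "\<dots> \<longleftrightarrow> good l m s \<omega>" unfolding good_def block_sum_def l_def by auto
      finally show ?thesis .
    qed
    then show ?thesis by auto
  qed
  have "card {\<omega> \<in> cube (m*l + (n - m*l)). good l m s (restrict \<omega> {..<m*l}) \<and> (\<lambda>_. True) (\<lambda>i\<in>{..<n - m*l}. \<omega> (m*l+i))}
     = card {x \<in> cube (m*l). good l m s x} * card {y \<in> cube (n - m*l). (\<lambda>_. True) y}" by (rule split_card)
  then have "card {\<omega> \<in> cube n. good l m s \<omega>} = c^m * 2^(n - m*l)"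
    using ml by (simp add: good_restrict card_blocks card_cube c_def)
  then have "measure_pmf.prob (pmf_of_set (cube n)) {\<omega>. real (max_block lam n \<omega>) \<le> s} = real (c^m * 2^(n - m*l)) / 2^n"
    by (simp add: measure_pmf_of_set finite_cube cube_nonempty set_eq card_cube)
  also have "\<dots> = (real c / 2^l)^m"
  proof -
    have "(2::real)^n = 2^(m*l) * 2^(n - m*l)" using ml by (simp add: power_add[symmetric])
    then show ?thesis by (simp add: power_divide power_mult mult.commute)
  qed
  also have "real c / 2^l = (\<Sum>k\<in>{k. k \<le> l \<and> real k \<le> s}. bp l k)"
    unfolding c_def card_le bp_def by (simp add: sum_divide_distrib)
  finally show ?thesis unfolding l_def m_def .
qed


lemma X1_bounds:
  fixes l a :: nat
  assumes L16: "real l \<ge> 16" and at: "real a > real l / 2" and aJ: "real a + sqrt (real l) \<le> real l"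
  shows "1 - 2 / (2*(real a - real l/2)/sqrt (real l)) - exp (-(2*(real a - real l/2)/sqrt (real l))/4)
           \<le> (\<Sum>k=a..l. bp l k) * (1 - rr l a) / bp l a"
    and "(\<Sum>k=a..l. bp l k) * (1 - rr l a) / bp l a \<le> 1"
proof -
  define L where "L = real l"
  define A where "A = real a"
  define t where "t = A - L/2"
  define sL where "sL = sqrt L"
  define v where "v = 2*t/sL"
  define J where "J = nat \<lfloor>sL\<rfloor>"
  define T where "T = (\<Sum>k=a..l. bp l k)"
  define B where "B = bp l a"
  define r where "r = rr l a"
  define \<rho> where "\<rho> = rr l (a+J)"
  have t0: "t > 0" using at unfolding t_def A_def L_def by simp
  have sL4: "sL \<ge> 4"
  proof -
    have "sqrt 16 \<le> sL" unfolding sL_def L_def using L16 by (rule real_sqrt_le_mono)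
    moreover have "sqrt (16::real) = 4" by (simp add: real_sqrt_eq_iff)
    ultimately show ?thesis by simp
  qed
  have sLsq: "sL * sL = L" unfolding sL_def L_def by simp
  have Lp: "L > 0" using L16 unfolding L_def by simp
  have J1: "real J \<le> sL" unfolding J_def using sL4 by simp
  have J2: "real J \<ge> sL - 1" unfolding J_def using sL4 by linarith
  have J3: "real J \<ge> sL / 2" using J2 sL4 by simp
  have v0: "v > 0" unfolding v_def using t0 sL4 by simp
  have aJl: "a + J \<le> l"
  proof -
    have "real (a + J) \<le> real l" using aJ J1 unfolding A_def L_def sL_def by simp
    then show ?thesis by (simp only: of_nat_le_iff)
  qed
  have al: "a \<le> l" using aJl by simp
  have l2a: "l < 2*a + 1"
  proof -
    have "real l < real (2*a+1)" using at by simp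
    then show ?thesis by (simp only: of_nat_less_iff)
  qed
  have l2aJ: "l < 2*(a+J)+1" using l2a by simp
  have Bp: "B > 0" unfolding B_def using al by (simp add: bp_pos)
  have r_eq: "1 - r = (2*t+1)/(A+1)" unfolding r_def rr_def t_def A_def L_def by (simp add: field_simps)
  have rho_eq: "1 - \<rho> = (2*t + 2*real J + 1)/(A + real J + 1)"
    unfolding \<rho>_def rr_def t_def A_def L_def by (simp add: field_simps)
  have A0: "A \<ge> 0" unfolding A_def by simp
  have r1: "1 - r > 0" unfolding r_eq using t0 A0 by simp
  have rho1: "1 - \<rho> > 0" unfolding rho_eq using t0 A0 by simp
  have rho0: "\<rho> \<ge> 0" unfolding \<rho>_def using aJl by (simp add: rr_nonneg)
  have up: "T \<le> B / (1 - r)" unfolding T_def B_def r_def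
    by (rule tail_upper[OF al]) (use r1 r_def in simp)
  have "T * (1 - r) \<le> B" using up r1 by (simp add: field_simps)
  then show "(\<Sum>k=a..l. bp l k) * (1 - rr l a) / bp l a \<le> 1"
    using Bp unfolding T_def[symmetric] B_def[symmetric] r_def[symmetric] by simp
  define P where "P = \<rho> ^ Suc J"
  have lo: "B * ((1 - P) / (1 - \<rho>)) \<le> T" unfolding T_def B_def P_def \<rho>_def
    by (rule tail_lower[OF aJl l2aJ])
  have X1lo: "(1 - P) * ((1 - r) / (1 - \<rho>)) \<le> T * (1 - r) / B"
  proof -
    have "B * ((1 - P) / (1 - \<rho>)) * (1 - r) \<le> T * (1 - r)"
      using lo r1 by (intro mult_right_mono) auto
    then show ?thesis using Bp by (simp add: field_simps)
  qed
  have P0: "P \<ge> 0" unfolding P_def using rho0 by simp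
  have P1: "P \<le> 1" unfolding P_def by (rule power_le_one) (use rho0 rho1 in auto)
  have Y: "(1 - r) / (1 - \<rho>) \<ge> 1 - 2/v"
  proof -
    have f1: "(1 - r) / (1 - \<rho>) = ((2*t+1)/(2*t+2*real J+1)) * ((A + real J + 1)/(A+1))"
      unfolding r_eq rho_eq using t0 A0 by (simp add: field_simps)
    have f2: "(A + real J + 1)/(A+1) \<ge> 1" using A0 by simp
    have f3: "(2*t+1)/(2*t+2*real J+1) \<ge> 0" using t0 by simp
    have f4: "(2*t+1)/(2*t+2*real J+1) \<ge> 1 - real J / t"
    proof -
      have "(t - real J) * (2*t+2*real J+1) \<le> (2*t+1) * t"
        by (simp add: algebra_simps)
      then have "(t - real J) / t \<le> (2*t+1)/(2*t+2*real J+1)"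
        using t0 by (simp add: field_simps)
      moreover have "(t - real J) / t = 1 - real J / t" using t0 by (simp add: field_simps)
      ultimately show ?thesis by simp
    qed
    have f5: "real J / t \<le> 2 / v"
    proof -
      have "real J / t \<le> sL / t" using J1 t0 by (simp add: divide_right_mono)
      also have "sL / t = 2 / v" unfolding v_def using t0 sL4 by (simp add: field_simps)
      finally show ?thesis .
    qed
    have "(2*t+1)/(2*t+2*real J+1) \<le> ((2*t+1)/(2*t+2*real J+1)) * ((A + real J + 1)/(A+1))"
      using f2 f3 by (metis mult_left_mono mult.right_neutral)
    then show ?thesis unfolding f1 using f4 f5 by linarith
  qed
  have X1lo2: "1 - 2/v - P \<le> (1 - P) * ((1 - r) / (1 - \<rho>))"
  proof -
    have "(1 - P) * (1 - 2/v) \<le> (1 - P) * ((1 - r) / (1 - \<rho>))"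
      using Y P1 by (intro mult_left_mono) auto
    moreover have "1 - 2/v - P \<le> (1 - P) * (1 - 2/v)"
    proof -
      have "0 \<le> P * (2/v)" using P0 v0 by simp
      moreover have ew: "(1 - P)*(1 - w) = 1 - w - P + P*w" for w :: real by (simp add: algebra_simps)
      ultimately show ?thesis using ew[of "2/v"] by linarith
    qed
    ultimately show ?thesis by linarith
  qed
  have Pexp: "P \<le> exp (-v/4)"
  proof -
    have "P \<le> \<rho> ^ J" unfolding P_def using rho0 rho1 by (intro power_decreasing) auto
    also have "\<dots> \<le> exp (-(1 - \<rho>)) ^ J"
    proof (rule power_mono)
      show "\<rho> \<le> exp (-(1 - \<rho>))" using exp_ge_add_one_self[of "-(1-\<rho>)"] by simp
    qed (use rho0 in simp)
    also have "\<dots> = exp (-(1 - \<rho>) * real J)" by (simp add: exp_of_nat_mult[symmetric] mult.commute)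
    also have "\<dots> \<le> exp (-v/4)"
    proof -
      have AJ: "A + real J + 1 \<le> 2 * L"
      proof -
        have "real (a + J) \<le> real l" using aJl by (simp only: of_nat_le_iff)
        then show ?thesis unfolding A_def L_def using L16 by simp
      qed
      have "1 - \<rho> \<ge> t / L"
      proof -
        have "2*t / (2*L) \<le> 2*t / (A + real J + 1)"
          using AJ t0 A0 by (intro divide_left_mono) auto
        also have "2*t / (A + real J + 1) \<le> (2*t + 2*real J + 1)/(A + real J + 1)"
          using A0 by (intro divide_right_mono) auto
        finally show ?thesis unfolding rho_eq using Lp by simp
      qed
      then have "(t / L) * (sL/2) \<le> (1 - \<rho>) * real J"
        using J3 t0 Lp sL4 rho1 by (intro mult_mono) auto
      moreover have "(t / L) * (sL/2) = v/4"
        unfolding v_def using sLsq[symmetric] sL4 by (simp add: field_simps)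
      ultimately have vJ: "v/4 \<le> (1 - \<rho>) * real J" by linarith
      have "-(1 - \<rho>) * real J = -((1 - \<rho>) * real J)" by (rule mult_minus_left)
      then have "-(1 - \<rho>) * real J \<le> -v/4" using vJ by linarith
      then show ?thesis by (simp only: exp_le_cancel_iff)
    qed
    finally show ?thesis .
  qed
  show "1 - 2 / (2*(real a - real l/2)/sqrt (real l)) - exp (-(2*(real a - real l/2)/sqrt (real l))/4)
           \<le> (\<Sum>k=a..l. bp l k) * (1 - rr l a) / bp l a"
    using X1lo X1lo2 Pexp unfolding T_def[symmetric] B_def[symmetric] r_def[symmetric]
      v_def[symmetric] t_def[symmetric] A_def[symmetric] L_def[symmetric] sL_def[symmetric]
    by linarith
qed


lemma X2_bound:
  fixes l a :: nat
  assumes c: "l div 2 \<le> a" and cond: "4*(real a - real l/2 + 1) \<le> real l" and t1: "real a - real l/2 \<ge> 1"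
  shows "\<bar>ln (bp l a) - ln (bp l (l div 2)) + (2*(real a - real l/2)/sqrt (real l))^2/2\<bar>
           \<le> 16*(2*(real a - real l/2)/sqrt (real l))^3/sqrt (real l) + 1/real l"
proof -
  define L where "L = real l"
  define t where "t = real a - real l/2"
  define sL where "sL = sqrt L"
  have h8: "4*(real a - real l/2 + 1) \<ge> 8" using t1 by simp
  have Lp: "L > 0" using cond h8 unfolding L_def by linarith
  have sLp: "sL > 0" unfolding sL_def using Lp by simp
  have sLsq: "sL^2 = L" unfolding sL_def using Lp by simp
  have e1: "(2*t/sL)^2/2 = 2*t^2/L"
    using sLp by (simp add: power_divide sLsq[symmetric] power_mult_distrib)
  have e2: "16*(2*t/sL)^3/sL = 128*t^3/L^2"
  proof -
    have "sL^3 * sL = L^2" using sLsq by (simp add: power2_eq_square power3_eq_cube)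
    then show ?thesis using sLp by (simp add: power_divide power_mult_distrib field_simps)
  qed
  have e3: "16*(t+1)^3/L^2 \<le> 128*t^3/L^2"
  proof -
    have "(t+1)^3 \<le> (2*t)^3" by (rule power_mono) (use t1 in \<open>auto simp: t_def\<close>)
    then have "16*(t+1)^3 \<le> 128*t^3" by (simp add: power_mult_distrib)
    then show ?thesis using Lp by (simp add: divide_right_mono)
  qed
  have "\<bar>ln (bp l a) - ln (bp l (l div 2)) + 2*t^2/L\<bar> \<le> 16*(t+1)^3/L^2 + 1/L"
    using local_est[OF c cond] unfolding t_def L_def .
  then have "\<bar>ln (bp l a) - ln (bp l (l div 2)) + (2*t/sL)^2/2\<bar> \<le> 16*(2*t/sL)^3/sL + 1/L"
    using e3 unfolding e1 e2 by linarith
  then show ?thesis unfolding t_def sL_def L_def .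
qed

lemma X4_eq:
  fixes L A t v sL :: real
  assumes "sL > 0" "sL * sL = L" "t = v * sL / 2" "A = L/2 + t" "v > 0"
  shows "(1 - (L - A)/(A + 1)) * sL / v = (1 + 1/(v * sL)) / (1/2 + v/(2 * sL) + 1/L)"
proof -
  have Lp: "L > 0" using assms(1,2) by (metis mult_pos_pos)
  have vs: "v * sL > 0" using assms(1,5) by simp
  have tp: "t > 0" using assms(3) vs by linarith
  have Ap: "A + 1 > 0" using assms(4) Lp tp by simp
  have D1: "(A+1)/sL = sL/2 + v/2 + 1/sL"
  proof -
    have "A + 1 = sL * sL/2 + v * sL/2 + 1" using assms(2,3,4) by simp
    then show ?thesis using assms(1) by (simp add: field_simps)
  qed
  have l: "(1 - (L - A)/(A + 1)) * sL / v = (v * sL + 1) / (v * ((A+1)/sL))"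
  proof -
    have "2 * A + 1 - L = v * sL + 1" using assms(3,4) by simp
    moreover have "(1 - (L - A)/(A + 1)) = (2 * A + 1 - L)/(A+1)" using Ap by (simp add: field_simps)
    ultimately show ?thesis using Ap assms(1,5) by (simp add: field_simps)
  qed
  have r: "(1 + 1/(v * sL)) / (1/2 + v/(2 * sL) + 1/L) = (v * sL + 1) / (v * (sL/2 + v/2 + 1/sL))"
  proof -
    have n: "1 + 1/(v * sL) = (v * sL + 1)/(v * sL)" using assms(1,5) by (simp add: field_simps)
    have d: "1/2 + v/(2 * sL) + 1/L = (sL/2 + v/2 + 1/sL)/sL" using assms(1) unfolding assms(2)[symmetric] by (simp add: field_simps)
    have g: "(x/(v * sL))/(y/sL) = x/(v * y)" for x y using assms(1) by simp
    show ?thesis unfolding n d g ..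
  qed
  show ?thesis unfolding l r D1 ..
qed

lemma ev_ge: "filterlim f at_top F \<Longrightarrow> eventually (\<lambda>n. (c::real) \<le> f n) F"
  unfolding filterlim_at_top by blast

lemma const_eq: "sqrt (2/pi) / 2 = 1 / sqrt (2*pi)"
proof -
  have "sqrt (2/pi) / 2 = sqrt 2 / (2 * sqrt pi)" by (simp add: real_sqrt_divide)
  also have "\<dots> = sqrt 2 / (sqrt 2 * sqrt 2 * sqrt pi)" by simp
  also have "\<dots> = 1 / (sqrt 2 * sqrt pi)" by (simp add: field_simps)
  also have "\<dots> = 1 / sqrt (2*pi)" by (simp add: real_sqrt_mult)
  finally show ?thesis .
qed

lemma tail_lim:
  fixes l a :: "nat \<Rightarrow> nat" and v :: "nat \<Rightarrow> real"
  assumes lt: "filterlim l at_top sequentially"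
    and vdef: "\<And>n. v n = 2*(real (a n) - real (l n)/2)/sqrt (real (l n))"
    and vt: "filterlim v at_top sequentially"
    and v3: "(\<lambda>n. v n^3 / sqrt (real (l n))) \<longlonglongrightarrow> 0"
  shows "(\<lambda>n. (\<Sum>k=a n..l n. bp (l n) k) * v n * exp (v n^2/2)) \<longlonglongrightarrow> 1 / sqrt (2*pi)"
proof -
  define L where "L n = real (l n)" for n
  define sL where "sL n = sqrt (L n)" for n
  define t where "t n = real (a n) - L n/2" for n
  define T where "T n = (\<Sum>k=a n..l n. bp (l n) k)" for n
  define B where "B n = bp (l n) (a n)" for n
  define C where "C n = bp (l n) (l n div 2)" for n
  define r where "r n = rr (l n) (a n)" for n
  have Lt: "filterlim L at_top sequentially" unfolding L_def
    by (rule filterlim_compose[OF filterlim_real_sequentially lt])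
  have sLt: "filterlim sL at_top sequentially" unfolding sL_def
    by (rule filterlim_compose[OF sqrt_at_top Lt])
  have iL: "(\<lambda>n. 1 / L n) \<longlonglongrightarrow> 0" using tendsto_inverse_0_at_top[OF Lt] by (simp add: inverse_eq_divide)
  have isL: "(\<lambda>n. 1 / sL n) \<longlonglongrightarrow> 0" using tendsto_inverse_0_at_top[OF sLt] by (simp add: inverse_eq_divide)
  have iv: "(\<lambda>n. 1 / v n) \<longlonglongrightarrow> 0" using tendsto_inverse_0_at_top[OF vt] by (simp add: inverse_eq_divide)
  have v3': "(\<lambda>n. v n^3 / sL n) \<longlonglongrightarrow> 0" using v3 unfolding sL_def L_def .
  have vsL: "(\<lambda>n. v n / sL n) \<longlonglongrightarrow> 0"
  proof (rule tendsto_sandwich[OF _ _ tendsto_const v3'])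
    show "\<forall>\<^sub>F n in sequentially. 0 \<le> v n / sL n"
      using ev_ge[OF vt, of 1] ev_ge[OF sLt, of 1] by eventually_elim simp
    show "\<forall>\<^sub>F n in sequentially. v n / sL n \<le> v n^3 / sL n"
      using ev_ge[OF vt, of 1] ev_ge[OF sLt, of 1]
    proof eventually_elim
      case (elim n)
      have "v n ^ 1 \<le> v n ^ 3" by (rule power_increasing) (use elim in auto)
      then show ?case using elim by (simp add: divide_right_mono)
    qed
  qed
  have ev_vsL: "eventually (\<lambda>n. v n / sL n < 1/128) sequentially"
    using order_tendstoD(2)[OF vsL, of "1/128"] by simp
  define G where "G n = (l n div 2 \<le> a n \<and> 4*(t n + 1) \<le> L n \<and> t n \<ge> 1 \<and> real (a n) > L n / 2
      \<and> real (a n) + sL n \<le> L n \<and> L n \<ge> 16 \<and> v n > 0 \<and> sL n > 0 \<and> t n = v n * sL n / 2 \<and> sL n * sL n = L n)" for n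
  have evG: "eventually G sequentially"
    using ev_ge[OF Lt, of 256] ev_ge[OF vt, of 8] ev_vsL
  proof eventually_elim
    case (elim n)
    have Lp: "L n > 0" using elim by simp
    have sLsq: "sL n * sL n = L n" unfolding sL_def using Lp by simp
    have sLp: "sL n > 0" unfolding sL_def using Lp by simp
    have sL16: "sL n \<ge> 16"
    proof -
      have "sqrt 256 \<le> sL n" unfolding sL_def using elim by (intro real_sqrt_le_mono) simp
      moreover have "sqrt (256::real) = 16" by (simp add: real_sqrt_eq_iff)
      ultimately show ?thesis by simp
    qed
    have vn: "v n = 2 * t n / sL n" unfolding vdef t_def sL_def L_def ..
    have tn: "t n = v n * sL n / 2" using vn sLp by (simp add: field_simps)
    have vs: "v n * sL n \<ge> 8 * 16" using elim sL16 by (intro mult_mono) auto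
    have t1: "t n \<ge> 64" using tn vs by simp
    have tL: "t n \<le> L n / 256"
    proof -
      have "v n \<le> sL n / 128" using elim sLp by (simp add: field_simps)
      then have "v n * sL n \<le> sL n / 128 * sL n" using sLp by (intro mult_right_mono) auto
      then show ?thesis using tn sLsq by simp
    qed
    have sLL: "sL n \<le> L n / 16"
    proof -
      have "16 * sL n \<le> sL n * sL n" using sL16 sLp by (intro mult_right_mono) auto
      then show ?thesis using sLsq by simp
    qed
    have half: "real (l n div 2) \<le> L n / 2" unfolding L_def by linarith
    have an: "real (a n) = L n / 2 + t n" unfolding t_def by simp
    have "real (l n div 2) \<le> real (a n)" using half an t1 by linarith
    then have c1: "l n div 2 \<le> a n" by (simp only: of_nat_le_iff)
    have "4*t n + 4 \<le> L n" using tL elim by linarith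
    then have g2: "4*(t n + 1) \<le> L n" by simp
    have g5: "real (a n) + sL n \<le> L n" using an tL sLL by linarith
    have g4: "real (a n) > L n / 2" using an t1 by linarith
    have g7: "v n > 0" using elim by linarith
    have g3: "t n \<ge> 1" using t1 by linarith
    have g6: "L n \<ge> 16" using elim by linarith
    show "G n" unfolding G_def by (intro conjI c1 g2 g3 g4 g5 g6 g7 sLp sLsq tn)
  qed
  have X1: "(\<lambda>n. T n * (1 - r n) / B n) \<longlonglongrightarrow> 1"
  proof (rule tendsto_sandwich[OF _ _ _ tendsto_const])
    show "(\<lambda>n. 1 - 6 * (1 / v n)) \<longlonglongrightarrow> 1" using tendsto_diff[OF tendsto_const tendsto_mult[OF tendsto_const iv], of 1 6] by simp
    show "\<forall>\<^sub>F n in sequentially. 1 - 6 * (1 / v n) \<le> T n * (1 - r n) / B n"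
      using evG
    proof eventually_elim
      case (elim n)
      have h: "real (l n) \<ge> 16" "real (a n) > real (l n) / 2" "real (a n) + sqrt (real (l n)) \<le> real (l n)"
        using elim unfolding G_def sL_def L_def by auto
      have lo: "1 - 2 / v n - exp (- v n / 4) \<le> T n * (1 - r n) / B n"
        using X1_bounds(1)[OF h] unfolding T_def r_def B_def vdef[symmetric] by simp
      have vp: "v n > 0" using elim unfolding G_def by auto
      have "exp (v n / 4) \<ge> v n / 4" using exp_ge_add_one_self[of "v n / 4"] by linarith
      then have e4: "v n \<le> exp (v n / 4) * 4" by linarith
      have "exp (- v n / 4) \<le> 4 / v n" using e4 vp by (simp add: exp_minus field_simps)
      then show ?case using lo by simp
    qed
    show "\<forall>\<^sub>F n in sequentially. T n * (1 - r n) / B n \<le> 1"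
      using evG
    proof eventually_elim
      case (elim n)
      have h: "real (l n) \<ge> 16" "real (a n) > real (l n) / 2" "real (a n) + sqrt (real (l n)) \<le> real (l n)"
        using elim unfolding G_def sL_def L_def by auto
      show ?case using X1_bounds(2)[OF h] unfolding T_def r_def B_def .
    qed
  qed
  define E where "E n = ln (B n) - ln (C n) + v n^2/2" for n
  have E0: "E \<longlonglongrightarrow> 0"
  proof (rule Lim_null_comparison)
    show "\<forall>\<^sub>F n in sequentially. norm (E n) \<le> 16 * (v n^3 / sL n) + 1 / L n"
      using evG
    proof eventually_elim
      case (elim n)
      have h: "l n div 2 \<le> a n" "4*(real (a n) - real (l n)/2 + 1) \<le> real (l n)" "real (a n) - real (l n)/2 \<ge> 1"
        using elim unfolding G_def t_def L_def by auto
      show ?case using X2_bound[OF h] unfolding E_def B_def C_def vdef[symmetric] sL_def L_def by simp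
    qed
    show "(\<lambda>n. 16 * (v n^3 / sL n) + 1 / L n) \<longlonglongrightarrow> 0"
      using tendsto_add[OF tendsto_mult[OF tendsto_const v3'] iL, of 16] by simp
  qed
  have X2: "(\<lambda>n. exp (E n)) \<longlonglongrightarrow> 1" using tendsto_exp[OF E0] by simp
  have X3: "(\<lambda>n. C n * sL n) \<longlonglongrightarrow> sqrt (2/pi)"
    using filterlim_compose[OF bc_lim lt] unfolding C_def sL_def L_def bp_def by (simp add: o_def)
  have X4: "(\<lambda>n. (1 - r n) * sL n / v n) \<longlonglongrightarrow> 2"
  proof -
    have lim0: "(\<lambda>n. (1 + (1 / v n) * (1 / sL n)) / (1/2 + (v n / sL n) / 2 + 1 / L n)) \<longlonglongrightarrow> (1 + 0 * 0) / (1/2 + 0/2 + 0)"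
      by (intro tendsto_intros iv isL vsL iL) simp_all
    have c2: "(1 + 0 * 0) / (1/2 + 0/2 + 0) = (2::real)" by simp
    have lim: "(\<lambda>n. (1 + (1 / v n) * (1 / sL n)) / (1/2 + (v n / sL n) / 2 + 1 / L n)) \<longlonglongrightarrow> 2"
      using lim0 unfolding c2 .
    show ?thesis
    proof (rule Lim_transform_eventually[OF lim])
      show "\<forall>\<^sub>F n in sequentially. (1 + (1 / v n) * (1 / sL n)) / (1/2 + (v n / sL n) / 2 + 1 / L n) = (1 - r n) * sL n / v n"
        using evG
      proof eventually_elim
        case (elim n)
        have g: "sL n > 0" "sL n * sL n = L n" "t n = v n * sL n / 2" "real (a n) = L n/2 + t n" "v n > 0"
          using elim unfolding G_def t_def by auto
        have "(1 - (L n - real (a n))/(real (a n) + 1)) * sL n / v n = (1 + 1/(v n * sL n)) / (1/2 + v n/(2 * sL n) + 1/L n)"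
          by (rule X4_eq[OF g])
        moreover have "r n = (L n - real (a n))/(real (a n) + 1)" unfolding r_def rr_def L_def ..
        ultimately show ?case by simp
      qed
    qed
  qed
  have lim: "(\<lambda>n. (T n * (1 - r n) / B n) * exp (E n) * (C n * sL n) / ((1 - r n) * sL n / v n))
      \<longlonglongrightarrow> 1 * 1 * sqrt (2/pi) / 2"
    by (intro tendsto_divide tendsto_mult X1 X2 X3 X4) simp_all
  have c1: "1 * 1 * sqrt (2/pi) / 2 = 1 / sqrt (2*pi)" using const_eq by simp
  show ?thesis
  proof (rule Lim_transform_eventually[OF lim[unfolded c1]])
    show "\<forall>\<^sub>F n in sequentially. (T n * (1 - r n) / B n) * exp (E n) * (C n * sL n) / ((1 - r n) * sL n / v n)
        = (\<Sum>k=a n..l n. bp (l n) k) * v n * exp (v n^2/2)"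
      using evG
    proof eventually_elim
      case (elim n)
      have h: "real (a n) + sL n \<le> L n" "sL n > 0" using elim unfolding G_def by auto
      then have "real (a n) \<le> real (l n)" unfolding L_def by linarith
      then have al: "a n \<le> l n" by (simp only: of_nat_le_iff)
      have Bp: "B n > 0" unfolding B_def using al by (simp add: bp_pos)
      have Cp: "C n > 0" unfolding C_def by (simp add: bp_pos)
      have r1: "1 - r n \<noteq> 0"
      proof -
        have "r n < 1" unfolding r_def rr_def using elim unfolding G_def L_def by (simp add: field_simps)
        then show ?thesis by simp
      qed
      have sp: "sL n > 0" "v n > 0" using elim unfolding G_def by auto
      have eE: "exp (E n) = B n * exp (v n^2/2) / C n"
        unfolding E_def using Bp Cp by (simp add: exp_add exp_diff)
      show ?case unfolding eE T_def[symmetric] using Bp Cp r1 sp by (simp add: field_simps)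
    qed
  qed
qed


lemma pow_lim:
  fixes T :: "nat \<Rightarrow> real" and m :: "nat \<Rightarrow> nat"
  assumes mT: "(\<lambda>n. real (m n) * T n) \<longlonglongrightarrow> c" and T0: "T \<longlonglongrightarrow> 0" and Tnn: "\<And>n. T n \<ge> 0"
  shows "(\<lambda>n. (1 - T n) ^ m n) \<longlonglongrightarrow> exp (- c)"
proof -
  have evT: "eventually (\<lambda>n. T n < 1/2) sequentially" using order_tendstoD(2)[OF T0, of "1/2"] by simp
  define g where "g n = real (m n) * ln (1 - T n)" for n
  have g: "(\<lambda>n. g n) \<longlonglongrightarrow> - c"
  proof (rule tendsto_sandwich)
    show "(\<lambda>n. - (real (m n) * T n) - 2 * ((real (m n) * T n) * T n)) \<longlonglongrightarrow> - c"
      using tendsto_diff[OF tendsto_minus[OF mT] tendsto_mult[OF tendsto_const tendsto_mult[OF mT T0]], of 2] by simp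
    show "(\<lambda>n. - (real (m n) * T n)) \<longlonglongrightarrow> - c" using tendsto_minus[OF mT] .
    show "\<forall>\<^sub>F n in sequentially. - (real (m n) * T n) - 2 * ((real (m n) * T n) * T n) \<le> g n"
      using evT
    proof eventually_elim
      case (elim n)
      have "- T n - 2 * (T n)^2 \<le> ln (1 - T n)" by (rule ln_one_minus_pos_lower_bound) (use elim Tnn in auto)
      then have "real (m n) * (- T n - 2 * (T n)^2) \<le> real (m n) * ln (1 - T n)" by (rule mult_left_mono) simp
      then show ?case unfolding g_def by (simp add: algebra_simps power2_eq_square)
    qed
    show "\<forall>\<^sub>F n in sequentially. g n \<le> - (real (m n) * T n)"
      using evT
    proof eventually_elim
      case (elim n)
      have "ln (1 - T n) \<le> - T n" by (rule ln_one_minus_pos_upper_bound) (use elim Tnn in auto)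
      then have "real (m n) * ln (1 - T n) \<le> real (m n) * (- T n)" by (rule mult_left_mono) simp
      then show ?case unfolding g_def by simp
    qed
  qed
  have "(\<lambda>n. exp (g n)) \<longlonglongrightarrow> exp (- c)" by (rule tendsto_exp[OF g])
  then show ?thesis
  proof (rule Lim_transform_eventually)
    show "\<forall>\<^sub>F n in sequentially. exp (g n) = (1 - T n) ^ m n"
      using evT
    proof eventually_elim
      case (elim n)
      have "exp (g n) = exp (ln (1 - T n)) ^ m n" unfolding g_def by (rule exp_of_nat_mult)
      also have "\<dots> = (1 - T n) ^ m n" using elim by simp
      finally show ?case .
    qed
  qed
qed

lemma sum_split:
  assumes "0 \<le> s" "nat (\<lfloor>s\<rfloor> + 1) \<le> l"
  shows "(\<Sum>k\<in>{k. k \<le> l \<and> real k \<le> s}. bp l k) = 1 - (\<Sum>k=nat (\<lfloor>s\<rfloor> + 1)..l. bp l k)"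
proof -
  define a where "a = nat (\<lfloor>s\<rfloor> + 1)"
  have iff: "real k \<le> s \<longleftrightarrow> k < a" for k
  proof -
    have "real k \<le> s \<longleftrightarrow> int k \<le> \<lfloor>s\<rfloor>" by (simp add: le_floor_iff)
    also have "\<dots> \<longleftrightarrow> int k < \<lfloor>s\<rfloor> + 1" by linarith
    also have "\<dots> \<longleftrightarrow> k < a" unfolding a_def by (rule zless_nat_eq_int_zless[symmetric])
    finally show ?thesis .
  qed
  have al: "a \<le> l" using assms(2) unfolding a_def .
  have set_eq: "{k. k \<le> l \<and> real k \<le> s} = {..<a}"
  proof (rule set_eqI)
    fix k
    have "k \<in> {k. k \<le> l \<and> real k \<le> s} \<longleftrightarrow> k \<le> l \<and> k < a" using iff[of k] by simp
    also have "\<dots> \<longleftrightarrow> k < a" using al by linarith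
    finally show "k \<in> {k. k \<le> l \<and> real k \<le> s} \<longleftrightarrow> k \<in> {..<a}" by simp
  qed
  have tot: "(\<Sum>k\<le>l. bp l k) = 1"
  proof -
    have "(\<Sum>k\<le>l. bp l k) = real (\<Sum>k\<le>l. l choose k) / 2^l" unfolding bp_def by (simp add: sum_divide_distrib)
    also have "\<dots> = 1" by (simp add: choose_row_sum)
    finally show ?thesis .
  qed
  have un: "{..l} = {..<a} \<union> {a..l}"
  proof (rule set_eqI)
    fix k
    have "k \<le> l \<longleftrightarrow> k < a \<or> (a \<le> k \<and> k \<le> l)" using al by linarith
    then show "k \<in> {..l} \<longleftrightarrow> k \<in> {..<a} \<union> {a..l}" by simp
  qed
  have "(\<Sum>k\<le>l. bp l k) = (\<Sum>k<a. bp l k) + (\<Sum>k=a..l. bp l k)"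
    unfolding un by (rule sum.union_disjoint) auto
  then show ?thesis unfolding set_eq a_def[symmetric] using tot by simp
qed

lemma div_bounds:
  fixes n d :: nat
  assumes "d > 0"
  shows "real (n div d) \<le> real n / real d" "real n / real d - 1 < real (n div d)"
proof -
  have "real n = real (n div d * d + n mod d)" by simp
  then have e: "real n = real (n div d) * real d + real (n mod d)" by (simp only: of_nat_add of_nat_mult)
  have r: "real (n mod d) < real d" using assms by simp
  have dp: "real d > 0" using assms by simp
  show "real (n div d) \<le> real n / real d" using e dp by (simp add: field_simps)
  show "real n / real d - 1 < real (n div d)" using e r dp by (simp add: field_simps)
qed


lemma blen_bounds:
  assumes "0 < lam" "n \<ge> 1"
  shows "real n powr lam - 1 < real (blen lam n)" "real (blen lam n) \<le> real n powr lam" "1 \<le> real n powr lam"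
proof -
  have p1: "1 \<le> real n powr lam" using assms by (intro ge_one_powr_ge_zero) auto
  then have f0: "\<lfloor>real n powr lam\<rfloor> \<ge> 0" by simp
  have e: "real (blen lam n) = real_of_int \<lfloor>real n powr lam\<rfloor>" unfolding blen_def using f0 by simp
  show "real n powr lam - 1 < real (blen lam n)" unfolding e by linarith
  show "real (blen lam n) \<le> real n powr lam" unfolding e by linarith
  show "1 \<le> real n powr lam" by (rule p1)
qed

lemma pt: "0 < lam \<Longrightarrow> filterlim (\<lambda>n. real n powr lam) at_top sequentially"
proof -
  assume "0 < lam"
  then have "filterlim (\<lambda>x::real. x powr lam) at_top at_top" by real_asymp
  then show ?thesis by (rule filterlim_compose[OF _ filterlim_real_sequentially])
qed

lemma blen_lim:
  assumes "0 < lam"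
  shows "filterlim (\<lambda>n. real (blen lam n)) at_top sequentially" "filterlim (blen lam) at_top sequentially"
proof -
  have p: "filterlim (\<lambda>n. real n powr lam - 1) at_top sequentially"
    by (rule filterlim_tendsto_add_at_top[OF tendsto_const pt[OF assms], of "-1", simplified])
  show r: "filterlim (\<lambda>n. real (blen lam n)) at_top sequentially"
  proof (rule filterlim_at_top_mono[OF p])
    show "\<forall>\<^sub>F n in sequentially. real n powr lam - 1 \<le> real (blen lam n)"
      using eventually_ge_at_top[of "1::nat"] by eventually_elim (use blen_bounds[OF assms] in force)
  qed
  show "filterlim (blen lam) at_top sequentially"
    unfolding filterlim_at_top
  proof
    fix Z :: nat
    show "\<forall>\<^sub>F n in sequentially. Z \<le> blen lam n"
      using ev_ge[OF r, of "real Z"] by eventually_elim simp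
  qed
qed

lemma mp_lim:
  assumes "0 < lam" "lam < 1"
  shows "(\<lambda>n. real (nblocks lam n) * (real n powr lam) / real n) \<longlonglongrightarrow> 1"
    and "filterlim (\<lambda>n. real (nblocks lam n)) at_top sequentially"
proof -
  define p where "p n = real n powr lam" for n
  have ev: "eventually (\<lambda>n. n \<ge> 1 \<and> p n \<ge> 2) sequentially"
    using eventually_ge_at_top[of "1::nat"] ev_ge[OF pt[OF assms(1)], of 2] unfolding p_def by eventually_elim simp
  have pn: "(\<lambda>n. p n / real n) \<longlonglongrightarrow> 0"
  proof -
    have "((\<lambda>x::real. x powr lam / x) \<longlongrightarrow> 0) at_top" using assms by real_asymp
    from filterlim_compose[OF this filterlim_real_sequentially] show ?thesis unfolding p_def .
  qed
  have pp: "(\<lambda>n. p n / (p n - 1)) \<longlonglongrightarrow> 1"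
  proof -
    have "((\<lambda>x::real. x / (x - 1)) \<longlongrightarrow> 1) at_top" by real_asymp
    from filterlim_compose[OF this pt[OF assms(1)]] show ?thesis unfolding p_def .
  qed
  show "(\<lambda>n. real (nblocks lam n) * (real n powr lam) / real n) \<longlonglongrightarrow> 1"
    unfolding p_def[symmetric]
  proof (rule tendsto_sandwich[OF _ _ _ pp])
    show "(\<lambda>n. 1 - p n / real n) \<longlonglongrightarrow> 1" using tendsto_diff[OF tendsto_const pn, of 1] by simp
    show "\<forall>\<^sub>F n in sequentially. 1 - p n / real n \<le> real (nblocks lam n) * p n / real n"
      using ev
    proof eventually_elim
      case (elim n)
      have b: "p n - 1 < real (blen lam n)" "real (blen lam n) \<le> p n"
        using blen_bounds[OF assms(1), of n] elim unfolding p_def by auto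
      have lp: "real (blen lam n) > 0" using b elim by linarith
      then have l0: "blen lam n > 0" by simp
      have m1: "real n / real (blen lam n) - 1 < real (nblocks lam n)"
        unfolding nblocks_def by (rule div_bounds(2)[OF l0])
      have np: "real n > 0" using elim by simp
      have pl: "1 \<le> p n / real (blen lam n)" using b lp by simp
      have "(real n / real (blen lam n) - 1) * p n / real n \<le> real (nblocks lam n) * p n / real n"
        using m1 np elim by (intro divide_right_mono mult_right_mono) auto
      moreover have "(real n / real (blen lam n) - 1) * p n / real n = p n / real (blen lam n) - p n / real n"
        using np lp by (simp add: field_simps)
      ultimately show ?case using pl by linarith
    qed
    show "\<forall>\<^sub>F n in sequentially. real (nblocks lam n) * p n / real n \<le> p n / (p n - 1)"
      using ev
    proof eventually_elim
      case (elim n)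
      have b: "p n - 1 < real (blen lam n)" "real (blen lam n) \<le> p n"
        using blen_bounds[OF assms(1), of n] elim unfolding p_def by auto
      have lp: "real (blen lam n) > 0" using b elim by linarith
      then have l0: "blen lam n > 0" by simp
      have m1: "real (nblocks lam n) \<le> real n / real (blen lam n)"
        unfolding nblocks_def by (rule div_bounds(1)[OF l0])
      have np: "real n > 0" using elim by simp
      have "real (nblocks lam n) * p n / real n \<le> (real n / real (blen lam n)) * p n / real n"
        using m1 np elim by (intro divide_right_mono mult_right_mono) auto
      also have "\<dots> = p n / real (blen lam n)" using np lp by (simp add: field_simps)
      also have "\<dots> \<le> p n / (p n - 1)" using b elim by (intro divide_left_mono) auto
      finally show ?case .
    qed
  qed
  have np: "filterlim (\<lambda>n. real n / p n - 1) at_top sequentially"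
  proof -
    have "filterlim (\<lambda>x::real. x / x powr lam - 1) at_top at_top" using assms by real_asymp
    from filterlim_compose[OF this filterlim_real_sequentially] show ?thesis unfolding p_def .
  qed
  show "filterlim (\<lambda>n. real (nblocks lam n)) at_top sequentially"
  proof (rule filterlim_at_top_mono[OF np])
    show "\<forall>\<^sub>F n in sequentially. real n / p n - 1 \<le> real (nblocks lam n)"
      using ev
    proof eventually_elim
      case (elim n)
      have b: "p n - 1 < real (blen lam n)" "real (blen lam n) \<le> p n"
        using blen_bounds[OF assms(1), of n] elim unfolding p_def by auto
      have lp: "real (blen lam n) > 0" using b elim by linarith
      then have l0: "blen lam n > 0" by simp
      have m1: "real n / real (blen lam n) - 1 < real (nblocks lam n)"
        unfolding nblocks_def by (rule div_bounds(2)[OF l0])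
      have "real n / p n \<le> real n / real (blen lam n)" using b lp by (intro divide_left_mono) auto
      then show ?case using m1 by linarith
    qed
  qed
qed

lemma two_div_le: "(4::real) \<le> x \<Longrightarrow> 2 / x \<le> 2 / 4"
  by (rule divide_left_mono) auto

lemma ve_aux: "(q::real) > 0 \<Longrightarrow> 2 * (q/2 * u + th) / q = u + 2 * th / q"
  by (simp add: field_simps)

theorem lemma2p2:
  fixes lam \<beta> :: real
  assumes "0 < lam" "lam < 1" "0 < \<beta>" "\<beta> < 1"
  shows "(\<lambda>n. measure_pmf.prob (pmf_of_set (cube n))
            {\<omega>. real (max_block lam n \<omega>) \<le> thresh lam \<beta> n}) \<longlonglongrightarrow> \<beta>"
proof -
  define Lb where "Lb = ln (1/\<beta>)"
  have Lbp: "Lb > 0" unfolding Lb_def using assms by simp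
  define K where "K = ln (sqrt (4*pi*(1-lam)) * ln (1/\<beta>))"
  have eK: "exp K = sqrt (4*pi*(1-lam)) * Lb"
    unfolding K_def Lb_def[symmetric] using Lbp assms by simp
  define Df where "Df x = 2*(1-lam)*ln x - ln (ln x) - 2*K" for x :: real
  define l where "l n = blen lam n" for n
  define m where "m n = nblocks lam n" for n
  define p where "p n = real n powr lam" for n
  define u where "u n = sqrt (Df (real n))" for n
  define s where "s n = thresh lam \<beta> n" for n
  have s_eq: "s n = real (l n)/2 + sqrt (real (l n))/2 * u n" for n
    unfolding s_def thresh_def u_def Df_def K_def l_def by simp
  define a where "a n = nat (\<lfloor>s n\<rfloor> + 1)" for n
  define v where "v n = 2*(real (a n) - real (l n)/2)/sqrt (real (l n))" for n
  define T where "T n = (\<Sum>k=a n..l n. bp (l n) k)" for n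
  have Lt: "filterlim (\<lambda>n. real (l n)) at_top sequentially" unfolding l_def by (rule blen_lim(1)[OF assms(1)])
  have lt: "filterlim l at_top sequentially" unfolding l_def by (rule blen_lim(2)[OF assms(1)])
  have mp: "(\<lambda>n. real (m n) * p n / real n) \<longlonglongrightarrow> 1" unfolding m_def p_def by (rule mp_lim(1)[OF assms(1,2)])
  have mt: "filterlim (\<lambda>n. real (m n)) at_top sequentially" unfolding m_def by (rule mp_lim(2)[OF assms(1,2)])
  have D1: "(\<lambda>n. Df (real n) / ln (real n)) \<longlonglongrightarrow> 2*(1-lam)"
  proof -
    have "((\<lambda>x::real. (2*(1-lam)*ln x - ln (ln x) - 2*K)/ln x) \<longlongrightarrow> 2*(1-lam)) at_top"
      using assms by real_asymp
    from filterlim_compose[OF this filterlim_real_sequentially] show ?thesis unfolding Df_def .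
  qed
  have D2: "filterlim (\<lambda>n. Df (real n)) at_top sequentially"
  proof -
    have "filterlim (\<lambda>x::real. 2*(1-lam)*ln x - ln (ln x) - 2*K) at_top at_top"
      using assms by real_asymp
    from filterlim_compose[OF this filterlim_real_sequentially] show ?thesis unfolding Df_def .
  qed
  have D3: "(\<lambda>n. Df (real n) * sqrt (Df (real n)) / sqrt (p n / 2)) \<longlonglongrightarrow> 0"
  proof -
    have "((\<lambda>x::real. (2*(1-lam)*ln x - ln (ln x) - 2*K) * sqrt (2*(1-lam)*ln x - ln (ln x) - 2*K) / sqrt (x powr lam / 2)) \<longlongrightarrow> 0) at_top"
      using assms by real_asymp
    from filterlim_compose[OF this filterlim_real_sequentially] show ?thesis unfolding Df_def p_def .
  qed
  have ut: "filterlim u at_top sequentially" unfolding u_def by (rule filterlim_compose[OF sqrt_at_top D2])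
  define G where "G n = (n \<ge> 2 \<and> Df (real n) \<ge> 1 \<and> p n \<ge> 2 \<and> real (l n) \<ge> 16 \<and> m n \<ge> 1)" for n
  have evG: "eventually G sequentially"
    using eventually_ge_at_top[of "2::nat"] ev_ge[OF D2, of 1] ev_ge[OF pt[OF assms(1)], of 2] ev_ge[OF Lt, of 16] ev_ge[OF mt, of 1]
    unfolding G_def p_def by eventually_elim auto
  have Gfacts: "u n \<ge> 1 \<and> u n ^ 2 = Df (real n) \<and> real (l n) > p n / 2 \<and> sqrt (real (l n)) \<ge> 4 \<and> s n \<ge> 0
     \<and> s n < real (a n) \<and> real (a n) \<le> s n + 1 \<and> v n = u n + 2 * (real (a n) - s n) / sqrt (real (l n))"
    if "G n" for n
  proof -
    have g: "n \<ge> 2" "Df (real n) \<ge> 1" "p n \<ge> 2" "real (l n) \<ge> 16" using that unfolding G_def by auto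
    have u1: "u n \<ge> 1" unfolding u_def using g by simp
    have u2: "u n ^ 2 = Df (real n)" unfolding u_def using g by simp
    have lb: "p n - 1 < real (l n)" using blen_bounds[OF assms(1), of n] g unfolding l_def p_def by auto
    have lp: "real (l n) > p n / 2" using lb g by linarith
    have sl4: "sqrt (real (l n)) \<ge> 4"
    proof -
      have "sqrt 16 \<le> sqrt (real (l n))" using g by (intro real_sqrt_le_mono) simp
      moreover have "sqrt (16::real) = 4" by (simp add: real_sqrt_eq_iff)
      ultimately show ?thesis by simp
    qed
    have s0: "s n \<ge> 0" unfolding s_eq using u1 by simp
    have fl: "real_of_int \<lfloor>s n\<rfloor> \<le> s n" "s n < real_of_int \<lfloor>s n\<rfloor> + 1" by linarith+
    have f0: "\<lfloor>s n\<rfloor> \<ge> 0" using s0 by simp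
    have ae: "real (a n) = real_of_int \<lfloor>s n\<rfloor> + 1" unfolding a_def using f0 by simp
    have sa: "s n < real (a n)" "real (a n) \<le> s n + 1" using fl ae by linarith+
    have ve: "v n = u n + 2 * (real (a n) - s n) / sqrt (real (l n))"
    proof -
      have e1: "real (a n) - real (l n)/2 = sqrt (real (l n))/2 * u n + (real (a n) - s n)" unfolding s_eq by simp
      have "v n = 2 * (sqrt (real (l n))/2 * u n + (real (a n) - s n)) / sqrt (real (l n))" unfolding v_def e1 ..
      also have "\<dots> = u n + 2 * (real (a n) - s n) / sqrt (real (l n))" by (rule ve_aux) (use sl4 in linarith)
      finally show ?thesis .
    qed
    show ?thesis using u1 u2 lp sl4 s0 sa ve by simp
  qed
  have u3: "(\<lambda>n. u n ^ 3 / sqrt (real (l n))) \<longlonglongrightarrow> 0"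
  proof (rule tendsto_sandwich[OF _ _ tendsto_const D3])
    show "\<forall>\<^sub>F n in sequentially. 0 \<le> u n ^ 3 / sqrt (real (l n))"
      using evG by eventually_elim (use Gfacts in force)
    show "\<forall>\<^sub>F n in sequentially. u n ^ 3 / sqrt (real (l n)) \<le> Df (real n) * sqrt (Df (real n)) / sqrt (p n / 2)"
      using evG
    proof eventually_elim
      case (elim n)
      note gf = Gfacts[OF elim]
      have p2: "p n / 2 > 0" using elim unfolding G_def by auto
      have e: "u n ^ 3 = Df (real n) * sqrt (Df (real n))"
        using gf unfolding u_def by (simp add: power3_eq_cube power2_eq_square)
      have "sqrt (p n / 2) \<le> sqrt (real (l n))" using gf by (intro real_sqrt_le_mono) simp
      then have "u n ^ 3 / sqrt (real (l n)) \<le> u n ^ 3 / sqrt (p n / 2)"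
        using gf p2 by (intro divide_left_mono) auto
      then show ?case unfolding e .
    qed
  qed
  have isl: "(\<lambda>n. 1 / sqrt (real (l n))) \<longlonglongrightarrow> 0"
    using tendsto_inverse_0_at_top[OF filterlim_compose[OF sqrt_at_top Lt]] by (simp add: inverse_eq_divide)
  have usl: "(\<lambda>n. u n / sqrt (real (l n))) \<longlonglongrightarrow> 0"
  proof (rule tendsto_sandwich[OF _ _ tendsto_const u3])
    show "\<forall>\<^sub>F n in sequentially. 0 \<le> u n / sqrt (real (l n))"
      using evG by eventually_elim (use Gfacts in force)
    show "\<forall>\<^sub>F n in sequentially. u n / sqrt (real (l n)) \<le> u n ^ 3 / sqrt (real (l n))"
      using evG
    proof eventually_elim
      case (elim n)
      note gf = Gfacts[OF elim]
      have "u n ^ 1 \<le> u n ^ 3" by (rule power_increasing) (use gf in auto)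
      then show ?case using gf by (simp add: divide_right_mono)
    qed
  qed
  have dv: "0 \<le> v n - u n \<and> v n - u n \<le> 2 / sqrt (real (l n)) \<and> v n \<ge> 1" if "G n" for n
  proof -
    note gf = Gfacts[OF that]
    have sp: "sqrt (real (l n)) > 0" using gf by linarith
    have d: "v n - u n = 2 * (real (a n) - s n) / sqrt (real (l n))" using gf by simp
    have le: "2 * (real (a n) - s n) / sqrt (real (l n)) \<le> 2 / sqrt (real (l n))"
      using gf sp by (intro divide_right_mono) auto
    have ge: "0 \<le> 2 * (real (a n) - s n) / sqrt (real (l n))" using gf sp by simp
    have u1: "u n \<ge> 1" using gf by simp
    show ?thesis using d le ge u1 by linarith
  qed
  have vt: "filterlim v at_top sequentially"
  proof (rule filterlim_at_top_mono[OF ut])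
    show "\<forall>\<^sub>F n in sequentially. u n \<le> v n" using evG by eventually_elim (use dv in force)
  qed
  have v3: "(\<lambda>n. v n ^ 3 / sqrt (real (l n))) \<longlonglongrightarrow> 0"
  proof (rule tendsto_sandwich[OF _ _ tendsto_const])
    show "(\<lambda>n. 8 * (u n ^ 3 / sqrt (real (l n)))) \<longlonglongrightarrow> 0" using tendsto_mult[OF tendsto_const u3, of 8] by simp
    show "\<forall>\<^sub>F n in sequentially. 0 \<le> v n ^ 3 / sqrt (real (l n))"
      using evG
    proof eventually_elim
      case (elim n)
      then show ?case using dv[OF elim] by simp
    qed
    show "\<forall>\<^sub>F n in sequentially. v n ^ 3 / sqrt (real (l n)) \<le> 8 * (u n ^ 3 / sqrt (real (l n)))"
      using evG
    proof eventually_elim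
      case (elim n)
      note gf = Gfacts[OF elim] and d = dv[OF elim]
      have sp: "sqrt (real (l n)) \<ge> 4" using gf by simp
      have "2 / sqrt (real (l n)) \<le> 2 / 4" using sp by (rule two_div_le)
      then have "v n \<le> 2 * u n" using d gf by linarith
      then have "v n ^ 3 \<le> (2 * u n) ^ 3" by (rule power_mono) (use d in linarith)
      then have "v n ^ 3 \<le> 8 * u n ^ 3" by (simp add: power_mult_distrib)
      then show ?case using sp by (simp add: divide_right_mono)
    qed
  qed
  have tail: "(\<lambda>n. T n * v n * exp (v n^2/2)) \<longlonglongrightarrow> 1 / sqrt (2*pi)"
    unfolding T_def by (rule tail_lim[OF lt v_def vt v3])
  have F5: "(\<lambda>n. real (m n) * exp (- ((u n)^2)/2) / u n) \<longlonglongrightarrow> Lb * sqrt (2*pi)"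
  proof -
    have sq: "(\<lambda>n. sqrt (Df (real n) / ln (real n))) \<longlonglongrightarrow> sqrt (2*(1-lam))" by (rule tendsto_real_sqrt[OF D1])
    have lim: "(\<lambda>n. (real (m n) * p n / real n) * exp K / sqrt (Df (real n) / ln (real n))) \<longlonglongrightarrow> 1 * exp K / sqrt (2*(1-lam))"
      by (intro tendsto_divide tendsto_mult mp tendsto_const sq) (use assms in simp)
    have c: "1 * exp K / sqrt (2*(1-lam)) = Lb * sqrt (2*pi)"
    proof -
      have "sqrt (4*pi*(1-lam)) = sqrt (2*pi) * sqrt (2*(1-lam))" by (simp add: real_sqrt_mult[symmetric])
      moreover have "sqrt (2*(1-lam)) > 0" using assms by simp
      ultimately show ?thesis unfolding eK by (simp add: field_simps)
    qed
    show ?thesis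
    proof (rule Lim_transform_eventually[OF lim[unfolded c]])
      show "\<forall>\<^sub>F n in sequentially. (real (m n) * p n / real n) * exp K / sqrt (Df (real n) / ln (real n))
          = real (m n) * exp (- ((u n)^2)/2) / u n"
        using evG
      proof eventually_elim
        case (elim n)
        note gf = Gfacts[OF elim]
        have n2: "real n \<ge> 2" using elim unfolding G_def by auto
        have lnp: "ln (real n) > 0" using n2 by simp
        have Dp: "Df (real n) > 0" using elim unfolding G_def by auto
        have ex: "exp (- ((u n)^2)/2) = p n / real n * sqrt (ln (real n)) * exp K"
        proof -
          have "- ((u n)^2)/2 = (lam * ln (real n) - ln (real n)) + ln (ln (real n)) / 2 + K"
            using gf unfolding Df_def by (simp add: algebra_simps)
          then have "exp (- ((u n)^2)/2) = exp (lam * ln (real n)) / exp (ln (real n)) * exp (ln (ln (real n)) / 2) * exp K"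
            by (simp add: exp_add exp_diff)
          moreover have "exp (lam * ln (real n)) = p n" unfolding p_def using n2 by (simp add: powr_def)
          moreover have "exp (ln (real n)) = real n" using n2 by simp
          moreover have "exp (ln (ln (real n)) / 2) = sqrt (ln (real n))"
          proof -
            have "sqrt (ln (real n)) = ln (real n) powr (1/2)" using lnp by (simp add: powr_half_sqrt)
            also have "\<dots> = exp (ln (ln (real n)) / 2)" using lnp by (simp add: powr_def)
            finally show ?thesis ..
          qed
          ultimately show ?thesis by simp
        qed
        have ue: "u n = sqrt (Df (real n))" unfolding u_def ..
        have sr: "sqrt (Df (real n) / ln (real n)) = sqrt (Df (real n)) / sqrt (ln (real n))"
          by (simp add: real_sqrt_divide)
        have slp: "sqrt (ln (real n)) > 0" using lnp by simp
        have sDp: "sqrt (Df (real n)) > 0" using Dp by simp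
        show ?case unfolding ex unfolding ue sr using slp sDp n2 by (simp add: field_simps)
      qed
    qed
  qed
  have W: "(\<lambda>n. v n ^ 2 - u n ^ 2) \<longlonglongrightarrow> 0"
  proof (rule Lim_null_comparison)
    show "\<forall>\<^sub>F n in sequentially. norm (v n ^ 2 - u n ^ 2) \<le> 4 * (u n / sqrt (real (l n))) + 2 * (1 / sqrt (real (l n)))"
      using evG
    proof eventually_elim
      case (elim n)
      note gf = Gfacts[OF elim] and d = dv[OF elim]
      have sp: "sqrt (real (l n)) \<ge> 4" using gf by simp
      have "2 / sqrt (real (l n)) \<le> 2 / 4" using sp by (rule two_div_le)
      then have d1: "v n - u n \<le> 1" using d by linarith
      have e: "v n ^ 2 - u n ^ 2 = (v n - u n) * (v n + u n)" by (simp add: power2_eq_square algebra_simps)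
      have "(v n - u n) * (v n + u n) \<le> (2 / sqrt (real (l n))) * (2 * u n + 1)"
        using d d1 gf by (intro mult_mono) auto
      also have "\<dots> = 4 * (u n / sqrt (real (l n))) + 2 * (1 / sqrt (real (l n)))" by (simp add: add_divide_distrib algebra_simps)
      finally have "v n ^ 2 - u n ^ 2 \<le> 4 * (u n / sqrt (real (l n))) + 2 * (1 / sqrt (real (l n)))" unfolding e .
      moreover have "0 \<le> v n ^ 2 - u n ^ 2" unfolding e using d gf by simp
      ultimately show ?case by simp
    qed
    show "(\<lambda>n. 4 * (u n / sqrt (real (l n))) + 2 * (1 / sqrt (real (l n)))) \<longlonglongrightarrow> 0"
      using tendsto_add[OF tendsto_mult[OF tendsto_const usl] tendsto_mult[OF tendsto_const isl], of 4 2] by simp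
  qed
  have UV: "(\<lambda>n. u n / v n) \<longlonglongrightarrow> 1"
  proof -
    have "(\<lambda>n. u n / v n - 1) \<longlonglongrightarrow> 0"
    proof (rule Lim_null_comparison)
      show "\<forall>\<^sub>F n in sequentially. norm (u n / v n - 1) \<le> 2 * (1 / sqrt (real (l n)))"
        using evG
      proof eventually_elim
        case (elim n)
        note d = dv[OF elim]
        have vp: "v n > 0" using d by simp
        have e: "u n / v n - 1 = - ((v n - u n) / v n)" using vp by (simp add: field_simps)
        have mm: "(v n - u n) * 1 \<le> (v n - u n) * v n" by (rule mult_left_mono) (use d in auto)
        have "(v n - u n) / v n \<le> v n - u n" using mm vp by (simp add: divide_le_eq)
        moreover have "0 \<le> (v n - u n) / v n" using d by simp
        ultimately show ?case unfolding e using d by simp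
      qed
      show "(\<lambda>n. 2 * (1 / sqrt (real (l n)))) \<longlonglongrightarrow> 0" using tendsto_mult[OF tendsto_const isl, of 2] by simp
    qed
    from tendsto_add[OF this tendsto_const[of 1]] show ?thesis by simp
  qed
  have RV: "(\<lambda>n. real (m n) * exp (- ((v n)^2)/2) / v n) \<longlonglongrightarrow> Lb * sqrt (2*pi)"
  proof -
    have lim: "(\<lambda>n. (real (m n) * exp (- ((u n)^2)/2) / u n) * exp (- (v n ^ 2 - u n ^ 2)/2) * (u n / v n))
        \<longlonglongrightarrow> Lb * sqrt (2*pi) * exp (-0/2) * 1"
      by (intro tendsto_mult F5 tendsto_exp tendsto_divide tendsto_minus W UV tendsto_const) simp
    have c: "Lb * sqrt (2*pi) * exp (-0/2) * 1 = Lb * sqrt (2*pi)" by simp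
    show ?thesis
    proof (rule Lim_transform_eventually[OF lim[unfolded c]])
      show "\<forall>\<^sub>F n in sequentially. (real (m n) * exp (- ((u n)^2)/2) / u n) * exp (- (v n ^ 2 - u n ^ 2)/2) * (u n / v n)
          = real (m n) * exp (- ((v n)^2)/2) / v n"
        using evG
      proof eventually_elim
        case (elim n)
        note gf = Gfacts[OF elim] and d = dv[OF elim]
        have ee: "exp (- ((u n)^2)/2) * exp (- (v n ^ 2 - u n ^ 2)/2) = exp (- ((v n)^2)/2)"
          by (simp add: exp_add[symmetric] field_simps)
        have up: "u n > 0" "v n > 0" using gf d by auto
        have "(real (m n) * exp (- ((u n)^2)/2) / u n) * exp (- (v n ^ 2 - u n ^ 2)/2) * (u n / v n)
            = real (m n) * (exp (- ((u n)^2)/2) * exp (- (v n ^ 2 - u n ^ 2)/2)) / v n"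
          using up by (simp add: field_simps)
        then show ?case unfolding ee .
      qed
    qed
  qed
  have MT: "(\<lambda>n. real (m n) * T n) \<longlonglongrightarrow> Lb"
  proof -
    have lim: "(\<lambda>n. (T n * v n * exp (v n^2/2)) * (real (m n) * exp (- ((v n)^2)/2) / v n)) \<longlonglongrightarrow> 1 / sqrt (2*pi) * (Lb * sqrt (2*pi))"
      by (intro tendsto_mult tail RV)
    have c: "1 / sqrt (2*pi) * (Lb * sqrt (2*pi)) = Lb" by simp
    show ?thesis
    proof (rule Lim_transform_eventually[OF lim[unfolded c]])
      show "\<forall>\<^sub>F n in sequentially. (T n * v n * exp (v n^2/2)) * (real (m n) * exp (- ((v n)^2)/2) / v n) = real (m n) * T n"
        using evG
      proof eventually_elim
        case (elim n)
        note d = dv[OF elim]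
        have vp: "v n > 0" using d by simp
        have ee: "exp (v n^2/2) * exp (- ((v n)^2)/2) = 1" by (simp add: exp_add[symmetric])
        have "(T n * v n * exp (v n^2/2)) * (real (m n) * exp (- ((v n)^2)/2) / v n)
            = real (m n) * T n * (exp (v n^2/2) * exp (- ((v n)^2)/2))" using vp by (simp add: field_simps)
        then show ?case unfolding ee by simp
      qed
    qed
  qed
  have Tnn: "T n \<ge> 0" for n unfolding T_def by (intro sum_nonneg) (simp add: bp_nonneg)
  have T0: "T \<longlonglongrightarrow> 0"
  proof -
    have im: "(\<lambda>n. 1 / real (m n)) \<longlonglongrightarrow> 0" using tendsto_inverse_0_at_top[OF mt] by (simp add: inverse_eq_divide)
    have lim: "(\<lambda>n. (real (m n) * T n) * (1 / real (m n))) \<longlonglongrightarrow> Lb * 0" by (intro tendsto_mult MT im)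
    have c0: "Lb * 0 = (0::real)" by simp
    show ?thesis
    proof (rule Lim_transform_eventually[OF lim[unfolded c0]])
      show "\<forall>\<^sub>F n in sequentially. (real (m n) * T n) * (1 / real (m n)) = T n"
        using evG
      proof eventually_elim
        case (elim n)
        then have "real (m n) > 0" unfolding G_def by auto
        then show ?case by simp
      qed
    qed
  qed
  have PL: "(\<lambda>n. (1 - T n) ^ m n) \<longlonglongrightarrow> exp (- Lb)" by (rule pow_lim[OF MT T0 Tnn])
  have eb: "exp (- Lb) = \<beta>" unfolding Lb_def using assms by (simp add: ln_div)
  show ?thesis
  proof (rule Lim_transform_eventually[OF PL[unfolded eb]])
    have evA: "eventually (\<lambda>n. u n / sqrt (real (l n)) < 1/4) sequentially"
      using order_tendstoD(2)[OF usl, of "1/4"] by simp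
    show "\<forall>\<^sub>F n in sequentially. (1 - T n) ^ m n = measure_pmf.prob (pmf_of_set (cube n))
            {\<omega>. real (max_block lam n \<omega>) \<le> thresh lam \<beta> n}"
      using evG evA
    proof eventually_elim
      case (elim n)
      note gf = Gfacts[OF elim(1)]
      have m1: "nblocks lam n \<ge> 1" using elim(1) unfolding G_def m_def by auto
      have sp: "sqrt (real (l n)) > 0" using gf by linarith
      have ssq: "sqrt (real (l n)) * sqrt (real (l n)) = real (l n)" by simp
      have "sqrt (real (l n)) * u n = real (l n) * (u n / sqrt (real (l n)))"
        using sp ssq by (simp add: field_simps)
      also have "\<dots> \<le> real (l n) * (1/4)" using elim(2) by (intro mult_left_mono) auto
      finally have su: "sqrt (real (l n)) * u n \<le> real (l n) / 4" by simp
      have l16: "real (l n) \<ge> 16" using elim(1) unfolding G_def by auto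
      have a1: "real (a n) \<le> s n + 1" using gf by simp
      have s2: "s n = real (l n)/2 + (sqrt (real (l n)) * u n)/2" using s_eq[of n] by simp
      have "real (a n) \<le> real (l n)" using a1 s2 su l16 by linarith
      then have al: "nat (\<lfloor>s n\<rfloor> + 1) \<le> l n" unfolding a_def[symmetric] by (simp only: of_nat_le_iff)
      have "measure_pmf.prob (pmf_of_set (cube n)) {\<omega>. real (max_block lam n \<omega>) \<le> thresh lam \<beta> n}
          = (\<Sum>k\<in>{k. k \<le> l n \<and> real k \<le> s n}. bp (l n) k) ^ m n"
        unfolding l_def m_def s_def by (rule prob_formula[OF m1])
      also have "(\<Sum>k\<in>{k. k \<le> l n \<and> real k \<le> s n}. bp (l n) k) = 1 - T n"
        unfolding T_def a_def by (rule sum_split[OF _ al]) (use gf in simp)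
      finally show ?case by simp
    qed
  qed
qed


end
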